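(* Let $r\ge2$, $n\ge1$. Let $\varphi$ be a block function on $W_{r,n}$ and write it (uniquely) as $\varphi=\sum_{k=0}^n\varphi_k\phi^n_k$ with $\varphi_k\in\mathbb{C}$. Then for $k=0,\dots,n$, $$\varphi_k=\frac{\langle\varphi,\chi^{\boldsymbol{\lambda}_k}\rangle}{\binom{n}{k}},\qquad \boldsymbol{\lambda}_k=((n-k);(1^k);\emptyset;\dots;\emptyset).$$
   Context: $W_{r,n}=\mathbb{Z}_r\wr\mathfrak{S}_n$ is the group of $r$-colored permutations $w=w(1)^{c_1}\cdots w(n)^{c_n}$ ($c_i\in\{0,\dots,r-1\}$), with product $(\sigma\times\boldsymbol{x})(\tau\times\boldsymbol{y})=\sigma\tau\times(\boldsymbol{x}+\sigma(\boldsymbol{y}))$, $\sigma(\boldsymbol y)=(y_{\sigma(1)},\dots,y_{\sigma(n)})$, addition mod $r$. $\ell_n(w)$ is the number of cycles of $w(1)\cdots w(n)$ whose color (sum mod $r$ of the colors $c_i$ of its entries) is $0$. A block function is a function $W_{r,n}\to\mathbb{C}$ depending on $w$ only through $\ell_n(w)$. Set $\chi^n_k(w)=(rk+1)^{\ell_n(w)}$ (this is the character of $W_{r,n}$ acting on $V^{\otimes n}$, $V$ of dimension $rk+1$ with $k+1$ basis vectors of color $0$ and $k$ of each color $c\ge1$, $\mathfrak S_n$ permuting factors and $s_0=1^12^0\cdots n^0$ acting by $\xi^{\text{color of first factor}}$, $\xi=e^{2\pi i/r}$). The Foulkes characters are $\phi^n_k=\sum_{j=0}^k(-1)^j\binom{n+1}{j}\chi^n_{k-j}$,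 $k=0,\dots,n$; they form a basis of the space of block functions. $\langle\cdot,\cdot\rangle$ is the usual inner product $\langle\alpha,\beta\rangle=\frac{1}{|W_{r,n}|}\sum_{w}\alpha(w)\overline{\beta(w)}$. For an $r$-multipartition $\boldsymbol\lambda=(\lambda^{(0)};\dots;\lambda^{(r-1)})$ with $n_c=|\lambda^{(c)}|$, $\chi^{\boldsymbol\lambda}$ is the character of the irreducible module $\mathrm{Ind}_{W_{r,n_0}\times\cdots\times W_{r,n_{r-1}}}^{W_{r,n}}\boxtimes_c(\gamma_c\otimes S^{\lambda^{(c)}})$, where $S^{\lambda^{(c)}}$ is the inflated Specht module of $\mathfrak S_{n_c}$ and $\gamma_c(\sigma\times\boldsymbol x)=\xi^{c\sum_j x_j}$. *)

theory Defs
  imports Complex_Main "HOL-Combinatorics.Combinatorics"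
begin

type_synonym colperm = "(nat \<Rightarrow> nat) \<times> (nat \<Rightarrow> nat)"

text \<open>The group W_{r,n}: pairs (sigma, x), sigma a permutation of positions 0..n-1,
  x the colour vector (colours in 0..r-1, zero outside the positions).\<close>
definition W :: "nat \<Rightarrow> nat \<Rightarrow> colperm set" where
  "W r n = {(\<sigma>, x). \<sigma> permutes {..<n} \<and> (\<forall>i. x i < r) \<and> (\<forall>i\<ge>n. x i = 0)}"

text \<open>Product (sigma x x)(tau x y) = sigma tau x (x + sigma(y)), sigma(y)_i = y_(sigma i);
  for this to be associative, sigma tau is "first sigma, then tau", i.e. tau o sigma.\<close>
definition wmult :: "nat \<Rightarrow> colperm \<Rightarrow> colperm \<Rightarrow> colperm" where
  "wmult r w v = (fst v \<circ> fst w, \<lambda>i. (snd w i + snd v (fst w i)) mod r)"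

text \<open>Number of cycles of colour 0.\<close>
definition ell :: "nat \<Rightarrow> nat \<Rightarrow> colperm \<Rightarrow> nat" where
  "ell r n w = card {C \<in> (\<lambda>i. {(fst w ^^ m) i | m. True}) ` {..<n}.
                      (\<Sum>j\<in>C. snd w j) mod r = 0}"

definition chi :: "nat \<Rightarrow> nat \<Rightarrow> nat \<Rightarrow> colperm \<Rightarrow> complex" where
  "chi r n k w = (of_nat (r * k + 1)) ^ ell r n w"

definition foulkes :: "nat \<Rightarrow> nat \<Rightarrow> nat \<Rightarrow> colperm \<Rightarrow> complex" where
  "foulkes r n k w = (\<Sum>j\<le>k. (-1) ^ j * of_nat (Suc n choose j) * chi r n (k - j) w)"

definition inner :: "nat \<Rightarrow> nat \<Rightarrow> (colperm \<Rightarrow> complex) \<Rightarrow> (colperm \<Rightarrow> complex) \<Rightarrow> complex" where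
  "inner r n \<alpha> \<beta> = (\<Sum>w\<in>W r n. \<alpha> w * cnj (\<beta> w)) / of_nat (card (W r n))"

text \<open>Young-type subgroup W_{r,n-k} x W_{r,k} (first block positions 0..n-k-1,
  second block positions n-k..n-1).\<close>
definition Hsub :: "nat \<Rightarrow> nat \<Rightarrow> nat \<Rightarrow> colperm set" where
  "Hsub r n k = {w \<in> W r n. fst w ` {..<n-k} \<subseteq> {..<n-k}}"

text \<open>Character of (gamma_0 (x) S^(n-k)) boxtimes (gamma_1 (x) S^(1^k)) on Hsub:
  trivial on the first block; sign times xi^(sum of colours) on the second block.\<close>
definition psi :: "nat \<Rightarrow> nat \<Rightarrow> nat \<Rightarrow> colperm \<Rightarrow> complex" where
  "psi r n k w = of_int (sign (\<lambda>i. if n - k \<le> i then fst w i else i))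
                 * cis (2 * pi / real r) ^ (\<Sum>i\<in>{n-k..<n}. snd w i)"

text \<open>chi^lambda_k, lambda_k = ((n-k);(1^k);empty;...;empty): the induced character
  Ind(g) = 1/|H| * sum over h in G with h g h^-1 = c in H of psi(c).\<close>
definition chi_lambda :: "nat \<Rightarrow> nat \<Rightarrow> nat \<Rightarrow> colperm \<Rightarrow> complex" where
  "chi_lambda r n k g = (\<Sum>h\<in>W r n. \<Sum>c\<in>Hsub r n k.
       if wmult r h g = wmult r c h then psi r n k c else 0) / of_nat (card (Hsub r n k))"

end

theory Submission
  imports Defs "HOL-Computational_Algebra.Formal_Power_Series" "HOL-Combinatorics.Orbits" "HOL-Number_Theory.Cong"
begin

lemma bin_aux: "(of_nat (k + n choose k) :: complex) = (-1)^k * ((- of_nat n - 1) gchoose k)"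
proof -
  have "(of_nat (k + n choose k) :: complex) = (of_nat (k+n) gchoose k)"
    by (simp add: binomial_gbinomial)
  also have "\<dots> = (-1)^k * ((of_nat k - of_nat (k+n) - 1) gchoose k)"
    by (rule gbinomial_negated_upper)
  also have "of_nat k - of_nat (k+n) - 1 = (- of_nat n - 1 :: complex)" by simp
  finally show ?thesis .
qed

lemma bin_delta: "(\<Sum>i\<le>l. (-1)^i * of_nat (Suc n choose i) * of_nat (l - i + n choose n) :: complex)
   = (if l = 0 then 1 else 0)"
proof -
  have "(\<Sum>i\<le>l. (-1)^i * of_nat (Suc n choose i) * of_nat (l - i + n choose n) :: complex)
     = (\<Sum>i\<le>l. (-1)^l * ((of_nat (Suc n) gchoose i) * ((- of_nat n - 1) gchoose (l - i))))"
  proof (rule sum.cong[OF refl])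
    fix i assume i: "i \<in> {..l}"
    have e: "l - i + n choose n = (l - i) + n choose (l - i)"
      using binomial_symmetric[of "l-i" "l-i+n"] by simp
    have s: "(-1::complex)^i * (-1)^(l-i) = (-1)^l"
      using i by (simp add: power_add[symmetric])
    have "(-1)^i * of_nat (Suc n choose i) * of_nat (l - i + n choose n) =
       ((-1::complex)^i * (-1)^(l-i)) * ((of_nat (Suc n) gchoose i) * ((- of_nat n - 1) gchoose (l - i)))"
      unfolding e bin_aux unfolding binomial_gbinomial by (simp only: ac_simps)
    then show "(-1)^i * of_nat (Suc n choose i) * of_nat (l - i + n choose n) =
       (-1::complex)^l * ((of_nat (Suc n) gchoose i) * ((- of_nat n - 1) gchoose (l - i)))"
      unfolding s .
  qed
  also have "\<dots> = (-1)^l * (\<Sum>i=0..l. (of_nat (Suc n) gchoose i) * ((- of_nat n - 1) gchoose (l - i)))"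
    by (simp only: sum_distrib_left atLeast0AtMost)
  also have "\<dots> = (-1)^l * ((of_nat (Suc n) + (- of_nat n - 1)) gchoose l)"
    by (simp only: gbinomial_Vandermonde)
  also have "(of_nat (Suc n) + (- of_nat n - 1)) = (0::complex)" by simp
  also have "(-1)^l * ((0::complex) gchoose l) = (if l = 0 then 1 else 0)" by (cases l) auto
  finally show ?thesis .
qed

lemma choose_prod_eq:
  assumes "k \<le> n" "k \<le> m"
  shows "(m + (n - k) choose (n - k)) * (m choose k) = (n choose k) * (m - k + n choose n)"
proof -
  define N where "N = m - k + n"
  have N1: "m + (n - k) = N" using assms unfolding N_def by simp
  have a: "(N choose m) * (m choose k) = (N choose k) * ((N - k) choose (m - k))"
    by (rule choose_mult) (use assms in \<open>auto simp: N_def\<close>)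
  have b: "(N choose n) * (n choose k) = (N choose k) * ((N - k) choose (n - k))"
    by (rule choose_mult) (use assms in \<open>auto simp: N_def\<close>)
  have c: "N choose (n - k) = N choose m"
    using binomial_symmetric[of "n-k" N] assms by (simp add: N_def)
  have d: "(N - k) choose (m - k) = (N - k) choose (n - k)"
    using binomial_symmetric[of "m-k" "N-k"] assms by (simp add: N_def)
  show ?thesis unfolding N1 c a d b[symmetric] N_def[symmetric] by simp
qed

lemma orth:
  assumes "k \<le> n"
  shows "(\<Sum>i\<le>j. (-1)^i * of_nat (Suc n choose i) *
           (of_nat (j - i + (n - k) choose (n - k)) * of_nat (j - i choose k)) :: complex)
       = (if j = k then of_nat (n choose k) else 0)"
proof (cases "k \<le> j")
  case False
  then show ?thesis by (auto intro!: sum.neutral)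
next
  case True
  define l where "l = j - k"
  have j: "j = k + l" using True l_def by simp
  have "(\<Sum>i\<le>j. (-1)^i * of_nat (Suc n choose i) *
           (of_nat (j - i + (n - k) choose (n - k)) * of_nat (j - i choose k)) :: complex)
      = (\<Sum>i\<le>l. (-1)^i * of_nat (Suc n choose i) *
           (of_nat (j - i + (n - k) choose (n - k)) * of_nat (j - i choose k)))"
    proof (rule sum.mono_neutral_right)
    show "\<forall>i\<in>{..j} - {..l}. (-1)^i * of_nat (Suc n choose i) *
           (of_nat (j - i + (n - k) choose (n - k)) * of_nat (j - i choose k)) = (0::complex)"
    proof
      fix i assume "i \<in> {..j} - {..l}"
      then have "j - i < k" using j by auto
      then have "j - i choose k = 0" by simp
      then show "(-1)^i * of_nat (Suc n choose i) *
           (of_nat (j - i + (n - k) choose (n - k)) * of_nat (j - i choose k)) = (0::complex)" by simp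
    qed
  qed (auto simp: j)
  also have "\<dots> = (\<Sum>i\<le>l. of_nat (n choose k) * ((-1)^i * of_nat (Suc n choose i) *
           of_nat (l - i + n choose n)))"
  proof (rule sum.cong[OF refl])
    fix i assume i: "i \<in> {..l}"
    have "(j - i + (n - k) choose (n - k)) * (j - i choose k) = (n choose k) * (j - i - k + n choose n)"
      by (rule choose_prod_eq) (use assms i j in auto)
    moreover have "j - i - k = l - i" using j by simp
    ultimately have "of_nat (j - i + (n - k) choose (n - k)) * of_nat (j - i choose k)
        = (of_nat (n choose k) * of_nat (l - i + n choose n) :: complex)"
      by (metis of_nat_mult)
    then show "(-1)^i * of_nat (Suc n choose i) *
           (of_nat (j - i + (n - k) choose (n - k)) * of_nat (j - i choose k)) =
        of_nat (n choose k) * ((-1)^i * of_nat (Suc n choose i) * (of_nat (l - i + n choose n) :: complex))"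
      by simp
  qed
  also have "\<dots> = of_nat (n choose k) * (if l = 0 then 1 else 0)"
    by (simp only: sum_distrib_left[symmetric] bin_delta)
  finally show ?thesis by (simp add: j)
qed

definition cnt :: "nat set \<Rightarrow> nat set \<Rightarrow> (nat \<Rightarrow> nat) \<Rightarrow> nat" where
  "cnt A S \<rho> = card {F \<in> PiE A (\<lambda>_. S). \<forall>i\<in>A. F (\<rho> i) = F i}"

lemma cnt_step_same:
  assumes A: "finite A" "a \<notin> A" and q: "q permutes A" and S: "finite S"
  shows "cnt (insert a A) S q = card S * cnt A S q"
proof -
  let ?X = "{F \<in> PiE (insert a A) (\<lambda>_. S). \<forall>i\<in>insert a A. F (q i) = F i}"
  let ?Y = "{F \<in> PiE A (\<lambda>_. S). \<forall>i\<in>A. F (q i) = F i}"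
  have qa: "q a = a" using permutes_not_in[OF q A(2)] .
  have qA: "\<And>i. i \<in> A \<Longrightarrow> q i \<in> A" using permutes_in_image[OF q] by simp
  have eq: "?X = (\<lambda>(y, g). g(a := y)) ` (S \<times> ?Y)"
  proof
    show "?X \<subseteq> (\<lambda>(y, g). g(a := y)) ` (S \<times> ?Y)"
    proof
      fix F assume F: "F \<in> ?X"
      have "F = (\<lambda>(y, g). g(a := y)) (F a, F(a := undefined))" by auto
      moreover have "F(a := undefined) \<in> ?Y"
      proof -
        have "F(a := undefined) \<in> PiE A (\<lambda>_. S)" using F A(2) by (auto simp: PiE_def extensional_def Pi_def)
        moreover have "\<forall>i\<in>A. (F(a := undefined)) (q i) = (F(a := undefined)) i"
        proof
          fix i assume i: "i \<in> A"
          have "q i \<noteq> a" "i \<noteq> a" using qA[OF i] i A(2) by auto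
          moreover have "F (q i) = F i" using F i by auto
          ultimately show "(F(a := undefined)) (q i) = (F(a := undefined)) i" by simp
        qed
        ultimately show ?thesis by blast
      qed
      moreover have "F a \<in> S" using F by auto
      ultimately show "F \<in> (\<lambda>(y, g). g(a := y)) ` (S \<times> ?Y)" by blast
    qed
  next
    have "\<forall>y\<in>S. \<forall>g\<in>?Y. g(a := y) \<in> ?X"
    proof (intro ballI)
      fix y g assume y: "y \<in> S" and g: "g \<in> ?Y"
      have "g(a := y) \<in> PiE (insert a A) (\<lambda>_. S)" using y g A(2) by (auto simp: PiE_def extensional_def Pi_def)
      moreover have "\<forall>i\<in>insert a A. (g(a := y)) (q i) = (g(a := y)) i"
      proof
        fix i assume i: "i \<in> insert a A"
        show "(g(a := y)) (q i) = (g(a := y)) i"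
        proof (cases "i = a")
          case True then show ?thesis using qa by simp
        next
          case False
          then have iA: "i \<in> A" using i by auto
          have "q i \<noteq> a" using qA[OF iA] A(2) by auto
          moreover have "g (q i) = g i" using g iA by auto
          ultimately show ?thesis using False by simp
        qed
      qed
      ultimately show "g(a := y) \<in> ?X" by blast
    qed
    then show "(\<lambda>(y, g). g(a := y)) ` (S \<times> ?Y) \<subseteq> ?X" by auto
  qed
  have inj: "inj_on (\<lambda>(y, g). g(a := y)) (S \<times> ?Y)"
    using inj_combinator[OF A(2), of "\<lambda>_. S"] by (rule inj_on_subset) auto
  have "card ?X = card (S \<times> ?Y)" unfolding eq by (rule card_image[OF inj])
  then show ?thesis unfolding cnt_def by (simp add: card_cartesian_product)
qed


lemma cnt_step_other:
  assumes A: "finite A" "a \<notin> A" and q: "q permutes A" and b: "b \<in> A"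
  shows "cnt (insert a A) S (transpose a b \<circ> q) = cnt A S q"
proof -
  let ?r = "transpose a b \<circ> q"
  let ?X = "{F \<in> PiE (insert a A) (\<lambda>_. S). \<forall>i\<in>insert a A. F (?r i) = F i}"
  let ?Y = "{F \<in> PiE A (\<lambda>_. S). \<forall>i\<in>A. F (q i) = F i}"
  have qa: "q a = a" using permutes_not_in[OF q A(2)] .
  have qA: "\<And>i. i \<in> A \<Longrightarrow> q i \<in> A" using permutes_in_image[OF q] by simp
  have ab: "a \<noteq> b" using A b by auto
  have "bij_betw (\<lambda>F. restrict F A) ?X ?Y"
  proof (rule bij_betw_byWitness[where f' = "\<lambda>g. g(a := g b)"])
    show "\<forall>F\<in>?X. (restrict F A)(a := restrict F A b) = F"
    proof
      fix F assume F: "F \<in> ?X"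
      have "F (?r a) = F a" using F by auto
      then have Fab: "F b = F a" using qa by simp
      show "(restrict F A)(a := restrict F A b) = F"
      proof
        fix x show "((restrict F A)(a := restrict F A b)) x = F x"
          using F Fab b by (cases "x = a"; cases "x \<in> A") (auto simp: PiE_def extensional_def)
      qed
    qed
    show "\<forall>g\<in>?Y. restrict (g(a := g b)) A = g"
    proof
      fix g assume g: "g \<in> ?Y"
      show "restrict (g(a := g b)) A = g"
      proof
        fix x show "restrict (g(a := g b)) A x = g x"
          using g A(2) by (cases "x \<in> A") (auto simp: PiE_def extensional_def)
      qed
    qed
    have "\<forall>F\<in>?X. restrict F A \<in> ?Y"
    proof
      fix F assume F: "F \<in> ?X"
      have "F (?r a) = F a" using F by auto
      then have Fab: "F b = F a" using qa by simp
      have "restrict F A \<in> PiE A (\<lambda>_. S)" using F by auto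
      moreover have "\<forall>i\<in>A. restrict F A (q i) = restrict F A i"
      proof
        fix i assume i: "i \<in> A"
        have qi: "q i \<in> A" "q i \<noteq> a" using qA[OF i] A(2) by auto
        have "F (?r i) = F i" using F i by auto
        then have "F (q i) = F i"
          using Fab qi by (cases "q i = b") auto
        then show "restrict F A (q i) = restrict F A i" using i qi by simp
      qed
      ultimately show "restrict F A \<in> ?Y" by blast
    qed
    then show "(\<lambda>F. restrict F A) ` ?X \<subseteq> ?Y" by blast
    have "\<forall>g\<in>?Y. g(a := g b) \<in> ?X"
    proof
      fix g assume g: "g \<in> ?Y"
      have "g(a := g b) \<in> PiE (insert a A) (\<lambda>_. S)" using g b A(2) by (auto simp: PiE_def extensional_def Pi_def)
      moreover have "\<forall>i\<in>insert a A. (g(a := g b)) (?r i) = (g(a := g b)) i"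
      proof
        fix i assume i: "i \<in> insert a A"
        show "(g(a := g b)) (?r i) = (g(a := g b)) i"
        proof (cases "i = a")
          case True then show ?thesis using qa ab by simp
        next
          case False
          then have iA: "i \<in> A" using i by auto
          have qi: "q i \<in> A" "q i \<noteq> a" using qA[OF iA] A(2) by auto
          have gq: "g (q i) = g i" using g iA by auto
          show ?thesis
          proof (cases "q i = b")
            case True
            then show ?thesis using gq False ab by simp
          next
            case F2: False
            then show ?thesis using gq False qi by (simp add: transpose_def)
          qed
        qed
      qed
      ultimately show "g(a := g b) \<in> ?X" by blast
    qed
    then show "(\<lambda>g. g(a := g b)) ` ?Y \<subseteq> ?X" by blast
  qed
  then show ?thesis unfolding cnt_def by (rule bij_betw_same_card)
qed


lemma cnt_empty: "cnt {} S id = 1"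
  unfolding cnt_def by simp

lemma count_sums:
  assumes "finite A" "finite S"
  shows "(\<Sum>\<rho>\<in>{p. p permutes A}. of_nat (cnt A S \<rho>) :: complex)
           = (\<Prod>t<card A. of_nat (card S) + of_nat t)
       \<and> (\<Sum>\<rho>\<in>{p. p permutes A}. of_int (sign \<rho>) * of_nat (cnt A S \<rho>) :: complex)
           = (\<Prod>t<card A. of_nat (card S) - of_nat t)"
  using assms(1)
proof (induction A rule: finite_induct)
  case empty
  then show ?case using cnt_empty[unfolded id_def] by (simp add: sign_id)
next
  case (insert a A)
  let ?P = "{p. p permutes A}"
  have sw: "\<And>f. sum f {p. p permutes (insert a A)} =
    sum (\<lambda>b. sum (\<lambda>q. f (transpose a b \<circ> q)) ?P) (insert a A)"
    by (rule sum_over_permutations_insert[OF insert(1,2)])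
  have c1: "\<And>q. q \<in> ?P \<Longrightarrow> cnt (insert a A) S q = card S * cnt A S q"
    using cnt_step_same[OF insert(1,2) _ assms(2)] by simp
  have c2: "\<And>q b. q \<in> ?P \<Longrightarrow> b \<in> A \<Longrightarrow> cnt (insert a A) S (transpose a b \<circ> q) = cnt A S q"
    using cnt_step_other[OF insert(1,2)] by simp
  have sg: "\<And>q b. q \<in> ?P \<Longrightarrow> sign (transpose a b \<circ> q) = (if a = b then 1 else -1) * sign q"
  proof -
    fix q b assume "q \<in> ?P"
    then have "permutation q" using insert(1) permutation_permutes by blast
    then show "sign (transpose a b \<circ> q) = (if a = b then 1 else -1) * sign q"
      by (simp add: sign_compose permutation_swap_id sign_swap_id)
  qed
  have nb: "\<And>b. b \<in> A \<Longrightarrow> a \<noteq> b" using insert(2) by auto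
  have "(\<Sum>\<rho>\<in>{p. p permutes (insert a A)}. of_nat (cnt (insert a A) S \<rho>) :: complex)
     = (\<Sum>q\<in>?P. of_nat (card S * cnt A S q)) + (\<Sum>b\<in>A. \<Sum>q\<in>?P. of_nat (cnt A S q))"
    unfolding sw sum.insert[OF insert(1,2)]
  proof (rule arg_cong2[where f = "(+)"])
    show "(\<Sum>q\<in>?P. of_nat (cnt (insert a A) S (transpose a a \<circ> q))) = (\<Sum>q\<in>?P. (of_nat (card S * cnt A S q) :: complex))"
      by (rule sum.cong) (auto simp: c1)
    show "(\<Sum>b\<in>A. \<Sum>q\<in>?P. of_nat (cnt (insert a A) S (transpose a b \<circ> q))) = (\<Sum>b\<in>A. \<Sum>q\<in>?P. (of_nat (cnt A S q) :: complex))"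
      by (rule sum.cong[OF refl], rule sum.cong) (auto simp: c2)
  qed
  also have "\<dots> = (of_nat (card S) + of_nat (card A)) * (\<Sum>q\<in>?P. of_nat (cnt A S q))"
    by (simp add: sum_distrib_left distrib_right sum.distrib)
  also have "\<dots> = (\<Prod>t<card (insert a A). of_nat (card S) + of_nat t)"
    using insert by simp
  finally have r1: "(\<Sum>\<rho>\<in>{p. p permutes (insert a A)}. of_nat (cnt (insert a A) S \<rho>) :: complex)
     = (\<Prod>t<card (insert a A). of_nat (card S) + of_nat t)" .
  have "(\<Sum>\<rho>\<in>{p. p permutes (insert a A)}. of_int (sign \<rho>) * of_nat (cnt (insert a A) S \<rho>) :: complex)
     = (\<Sum>q\<in>?P. of_int (sign q) * of_nat (card S * cnt A S q))
       + (\<Sum>b\<in>A. \<Sum>q\<in>?P. - (of_int (sign q) * of_nat (cnt A S q)))"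
    unfolding sw sum.insert[OF insert(1,2)]
  proof (rule arg_cong2[where f = "(+)"])
    show "(\<Sum>q\<in>?P. of_int (sign (transpose a a \<circ> q)) * of_nat (cnt (insert a A) S (transpose a a \<circ> q)))
       = (\<Sum>q\<in>?P. of_int (sign q) * (of_nat (card S * cnt A S q) :: complex))"
      by (rule sum.cong) (auto simp: c1 sg)
    show "(\<Sum>b\<in>A. \<Sum>q\<in>?P. of_int (sign (transpose a b \<circ> q)) * of_nat (cnt (insert a A) S (transpose a b \<circ> q)))
       = (\<Sum>b\<in>A. \<Sum>q\<in>?P. - (of_int (sign q) * (of_nat (cnt A S q) :: complex)))"
      by (rule sum.cong[OF refl], rule sum.cong) (auto simp: c2 sg nb)
  qed
  also have "\<dots> = (of_nat (card S) - of_nat (card A)) * (\<Sum>q\<in>?P. of_int (sign q) * of_nat (cnt A S q))"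
    by (simp add: sum_distrib_left sum_negf algebra_simps sum.distrib sum_subtractf)
  also have "\<dots> = (\<Prod>t<card (insert a A). of_nat (card S) - of_nat t)"
    using insert by simp
  finally show ?case using r1 by simp
qed

definition xi :: "nat \<Rightarrow> complex" where "xi r = cis (2 * pi / real r)"

lemma xi_pow_r: "r > 0 \<Longrightarrow> xi r ^ r = 1"
  unfolding xi_def DeMoivre by simp

lemma xi_pow_mod: "r > 0 \<Longrightarrow> xi r ^ a = xi r ^ (a mod r)"
proof -
  assume r: "r > 0"
  have "xi r ^ a = xi r ^ (r * (a div r) + a mod r)" by simp
  also have "\<dots> = (xi r ^ r) ^ (a div r) * xi r ^ (a mod r)" by (simp only: power_add power_mult)
  finally show ?thesis using xi_pow_r[OF r] by simp
qed

lemma xi_pow_eq1: assumes r: "r > 0" shows "xi r ^ a = 1 \<longleftrightarrow> r dvd a"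
proof
  assume "r dvd a"
  then obtain t where "a = r * t" by blast
  then show "xi r ^ a = 1" using xi_pow_r[OF r] by (simp add: power_mult)
next
  assume h: "xi r ^ a = 1"
  define t where "t = a mod r"
  have t: "t < r" using r t_def by simp
  have "xi r ^ t = 1" using h xi_pow_mod[OF r, of a] t_def by simp
  then have "cis (real t * (2 * pi / real r)) = 1" unfolding xi_def DeMoivre .
  then have "cos (real t * (2 * pi / real r)) = 1" by (metis cis.sel(1) one_complex.sel(1))
  then obtain z :: int where z: "real t * (2 * pi / real r) = real_of_int z * 2 * pi"
    using cos_one_2pi_int by blast
  then have "real t = real_of_int z * real r" using r by (simp add: field_simps)
  then have "int t = z * int r" by (metis of_int_eq_iff of_int_mult of_int_of_nat_eq)
  then have "t = 0" using t
    by (metis bot_nat_0.not_eq_extremum int_ops(1) mult_cancel_right1 nat_less_le of_nat_0_less_iff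
        of_nat_less_iff zero_less_mult_iff zmult_eq_1_iff linorder_not_le mult_le_cancel_right1
        of_nat_le_iff int_one_le_iff_zero_less)
  then show "r dvd a" using t_def by (simp add: dvd_eq_mod_eq_0)
qed

lemma geo_xi:
  assumes r: "r > 0"
  shows "(\<Sum>b<Suc (r * m). (xi r ^ s) ^ b) = (if r dvd s then of_nat (r * m) + 1 else 1)"
proof (cases "r dvd s")
  case True
  then have "xi r ^ s = 1" using xi_pow_eq1[OF r] by simp
  then show ?thesis using True by simp
next
  case False
  then have ne: "xi r ^ s \<noteq> 1" using xi_pow_eq1[OF r] by simp
  have "(xi r ^ s) ^ Suc (r * m) = xi r ^ s"
  proof -
    have "(xi r ^ s) ^ Suc (r * m) = xi r ^ s * ((xi r ^ r) ^ (s * m))"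
      by (simp add: power_mult[symmetric] ac_simps)
    then show ?thesis using xi_pow_r[OF r] by simp
  qed
  moreover have "(\<Sum>b<Suc (r * m). (xi r ^ s) ^ b) = ((xi r ^ s) ^ Suc (r * m) - 1) / (xi r ^ s - 1)"
    by (rule geometric_sum[OF ne])
  ultimately show ?thesis using False ne by simp
qed

lemma geo_xi_r:
  assumes r: "r > 0"
  shows "(\<Sum>c<r. (xi r ^ e) ^ c) = (if r dvd e then of_nat r else 0)"
proof (cases "r dvd e")
  case True
  then have "xi r ^ e = 1" using xi_pow_eq1[OF r] by simp
  then show ?thesis using True by simp
next
  case False
  then have ne: "xi r ^ e \<noteq> 1" using xi_pow_eq1[OF r] by simp
  have "(xi r ^ e) ^ r = 1"
    using xi_pow_r[OF r] by (metis power_mult power_mult_distrib power_one mult.commute)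
  then show ?thesis using False ne by (simp add: geometric_sum)
qed

context
  fixes \<sigma> :: "nat \<Rightarrow> nat" and n :: nat
  assumes sp: "\<sigma> permutes {..<n}"
begin

lemma sp_perm: "permutation \<sigma>"
  using sp permutation_permutes by blast

lemma orb_eq: "{(\<sigma> ^^ m) i | m. True} = orbit \<sigma> i"
  using orbit_altdef_permutation[OF sp_perm] by simp

lemma orb_self: "i \<in> orbit \<sigma> i"
  using permutation_self_in_orbit[OF sp_perm] .

lemma orb_same: "j \<in> orbit \<sigma> i \<Longrightarrow> orbit \<sigma> j = orbit \<sigma> i"
proof -
  assume j: "j \<in> orbit \<sigma> i"
  have ij: "i \<in> orbit \<sigma> j" using orbit_swap[OF orb_self j] .
  show ?thesis
  proof
    show "orbit \<sigma> j \<subseteq> orbit \<sigma> i"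
    proof
      fix x assume "x \<in> orbit \<sigma> j" then show "x \<in> orbit \<sigma> i" by (rule orbit_trans[OF _ j])
    qed
    show "orbit \<sigma> i \<subseteq> orbit \<sigma> j"
    proof
      fix x assume "x \<in> orbit \<sigma> i" then show "x \<in> orbit \<sigma> j" by (rule orbit_trans[OF _ ij])
    qed
  qed
qed

lemma orb_step: "orbit \<sigma> (\<sigma> i) = orbit \<sigma> i"
  using permutation_orbit_step[OF sp_perm] .

lemma sig_lt: "x < n \<Longrightarrow> \<sigma> x < n"
  using permutes_in_image[OF sp, of x] by simp

lemma funpow_lt: "i < n \<Longrightarrow> (\<sigma> ^^ m) i < n"
  by (induction m) (auto simp: sig_lt)

lemma orb_sub: "i < n \<Longrightarrow> orbit \<sigma> i \<subseteq> {..<n}"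
proof
  fix x assume i: "i < n" and "x \<in> orbit \<sigma> i"
  then have "x \<in> {(\<sigma> ^^ m) i | m. True}" using orb_eq by simp
  then obtain m where "x = (\<sigma> ^^ m) i" by blast
  then show "x \<in> {..<n}" using funpow_lt[OF i] by simp
qed

lemma orb_finite: "finite (orbit \<sigma> i)"
  using finite_orbit[OF orb_self] .

lemma const_orb:
  assumes F: "\<forall>j<n. F (\<sigma> j) = F j" and i: "i < n" and j: "j \<in> orbit \<sigma> i"
  shows "F j = F i"
  using j
proof (induction rule: orbit.induct)
  case base
  then show ?case using F i by simp
next
  case (step y)
  have "y < n" using orb_sub[OF i] step.hyps by auto
  then show ?case using F step.IH by simp
qed


lemma tensor:
  assumes r: "r > 0"
  shows "(of_nat (r * m + 1) :: complex) ^ ell r n (\<sigma>, x) =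
    (\<Sum>F\<in>PiE {..<n} (\<lambda>_. {..<Suc (r * m)}).
        if (\<forall>i<n. F (\<sigma> i) = F i) then xi r ^ (\<Sum>i<n. F i * x i) else 0)"
proof -
  define Orbs where "Orbs = orbit \<sigma> ` {..<n}"
  define B where "B = {..<Suc (r * m)}"
  define s where "s C = (\<Sum>j\<in>C. x j)" for C
  define V where "V = {F \<in> PiE {..<n} (\<lambda>_. B). \<forall>i<n. F (\<sigma> i) = F i}"
  have finO: "finite Orbs" unfolding Orbs_def by simp
  have ellO: "ell r n (\<sigma>, x) = card {C \<in> Orbs. r dvd s C}"
  proof -
    have e: "(\<lambda>i. {((fst (\<sigma>, x)) ^^ m) i | m. True}) = orbit \<sigma>"
      using orb_eq by (simp add: fun_eq_iff)
    show ?thesis unfolding ell_def e Orbs_def s_def by (simp add: dvd_eq_mod_eq_0)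
  qed
  define \<Phi> where "\<Phi> g = restrict (\<lambda>i. g (orbit \<sigma> i)) {..<n}" for g :: "nat set \<Rightarrow> nat"
  define \<Psi> where "\<Psi> F = restrict (\<lambda>C. F (SOME i. i < n \<and> orbit \<sigma> i = C)) Orbs" for F :: "nat \<Rightarrow> nat"
  have K: "F (SOME i. i < n \<and> orbit \<sigma> i = orbit \<sigma> y) = F y" if F: "F \<in> V" and y: "y < n" for F y
  proof -
    have "\<exists>i. i < n \<and> orbit \<sigma> i = orbit \<sigma> y" using y by blast
    then have "(SOME i. i < n \<and> orbit \<sigma> i = orbit \<sigma> y) < n \<and>
        orbit \<sigma> (SOME i. i < n \<and> orbit \<sigma> i = orbit \<sigma> y) = orbit \<sigma> y" by (rule someI_ex)
    then obtain i where i: "i = (SOME i. i < n \<and> orbit \<sigma> i = orbit \<sigma> y)" "i < n" "orbit \<sigma> i = orbit \<sigma> y"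
      by blast
    have "i \<in> orbit \<sigma> y" using i(3) orb_self[of i] by simp
    then have "F i = F y" using const_orb[of F y i] F y unfolding V_def by blast
    then show ?thesis using i(1) by simp
  qed
  have step12: "(\<Sum>F\<in>PiE {..<n} (\<lambda>_. B). if (\<forall>i<n. F (\<sigma> i) = F i) then xi r ^ (\<Sum>i<n. F i * x i) else 0)
      = (\<Sum>g\<in>PiE Orbs (\<lambda>_. B). xi r ^ (\<Sum>i<n. g (orbit \<sigma> i) * x i))"
  proof -
    have "(\<Sum>F\<in>PiE {..<n} (\<lambda>_. B). if (\<forall>i<n. F (\<sigma> i) = F i) then xi r ^ (\<Sum>i<n. F i * x i) else 0)
        = (\<Sum>F\<in>V. xi r ^ (\<Sum>i<n. F i * x i))"
      unfolding V_def by (rule sum.inter_filter[symmetric]) (simp add: B_def finite_PiE)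
    also have "\<dots> = (\<Sum>g\<in>PiE Orbs (\<lambda>_. B). xi r ^ (\<Sum>i<n. g (orbit \<sigma> i) * x i))"
    proof (rule sum.reindex_bij_witness[where i = \<Phi> and j = \<Psi>])
      fix F assume F: "F \<in> V"
      show "\<Phi> (\<Psi> F) = F"
      proof
        fix y show "\<Phi> (\<Psi> F) y = F y"
        proof (cases "y < n")
          case True
          then show ?thesis unfolding \<Phi>_def \<Psi>_def Orbs_def using K[OF F True] by simp
        next
          case False
          then show ?thesis using F unfolding \<Phi>_def V_def by (auto simp: PiE_def extensional_def)
        qed
      qed
      show "\<Psi> F \<in> PiE Orbs (\<lambda>_. B)"
      proof -
        have "F (SOME i. i < n \<and> orbit \<sigma> i = C) \<in> B" if C: "C \<in> Orbs" for C
        proof -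
          obtain y where y: "y < n" "C = orbit \<sigma> y" using C unfolding Orbs_def by blast
          show ?thesis using K[OF F y(1)] y F unfolding V_def by (auto simp: PiE_def Pi_def)
        qed
        then show ?thesis unfolding \<Psi>_def by auto
      qed
      show "xi r ^ (\<Sum>i<n. \<Psi> F (orbit \<sigma> i) * x i) = xi r ^ (\<Sum>i<n. F i * x i)"
      proof -
        have "(\<Sum>i<n. \<Psi> F (orbit \<sigma> i) * x i) = (\<Sum>i<n. F i * x i)"
          by (rule sum.cong[OF refl]) (auto simp: \<Psi>_def Orbs_def K[OF F])
        then show ?thesis by simp
      qed
    next
      fix g assume g: "g \<in> PiE Orbs (\<lambda>_. B)"
      show "\<Psi> (\<Phi> g) = g"
      proof
        fix C show "\<Psi> (\<Phi> g) C = g C"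
        proof (cases "C \<in> Orbs")
          case True
          obtain y where y: "y < n" "C = orbit \<sigma> y" using True unfolding Orbs_def by blast
          have "\<exists>i. i < n \<and> orbit \<sigma> i = C" using y by blast
          then have "(SOME i. i < n \<and> orbit \<sigma> i = C) < n \<and>
              orbit \<sigma> (SOME i. i < n \<and> orbit \<sigma> i = C) = C" by (rule someI_ex)
          then show ?thesis using True unfolding \<Psi>_def \<Phi>_def by simp
        next
          case False
          then show ?thesis using g unfolding \<Psi>_def by (auto simp: PiE_def extensional_def)
        qed
      qed
      show "\<Phi> g \<in> V"
      proof -
        have "\<Phi> g \<in> PiE {..<n} (\<lambda>_. B)" using g unfolding \<Phi>_def Orbs_def by (auto simp: PiE_def Pi_def)
        moreover have "\<forall>i<n. \<Phi> g (\<sigma> i) = \<Phi> g i"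
          using sig_lt orb_step unfolding \<Phi>_def by simp
        ultimately show ?thesis unfolding V_def by blast
      qed
    qed
    finally show ?thesis .
  qed
  have step3: "(\<Sum>i<n. g (orbit \<sigma> i) * x i) = (\<Sum>C\<in>Orbs. g C * s C)" for g :: "nat set \<Rightarrow> nat"
  proof -
    have "(\<Sum>i<n. g (orbit \<sigma> i) * x i) = (\<Sum>C\<in>Orbs. \<Sum>i\<in>{i\<in>{..<n}. orbit \<sigma> i = C}. g (orbit \<sigma> i) * x i)"
      unfolding Orbs_def by (rule sum.image_gen) simp
    also have "\<dots> = (\<Sum>C\<in>Orbs. g C * s C)"
    proof (rule sum.cong[OF refl])
      fix C assume C: "C \<in> Orbs"
      obtain y where y: "y < n" "C = orbit \<sigma> y" using C unfolding Orbs_def by blast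
      have eqC: "{i\<in>{..<n}. orbit \<sigma> i = C} = C"
      proof
        show "{i\<in>{..<n}. orbit \<sigma> i = C} \<subseteq> C" using orb_self by auto
        show "C \<subseteq> {i\<in>{..<n}. orbit \<sigma> i = C}" using y orb_sub[OF y(1)] orb_same by auto
      qed
      show "(\<Sum>i\<in>{i\<in>{..<n}. orbit \<sigma> i = C}. g (orbit \<sigma> i) * x i) = g C * s C"
      proof -
        have "(\<Sum>i\<in>{i\<in>{..<n}. orbit \<sigma> i = C}. g (orbit \<sigma> i) * x i) = (\<Sum>i\<in>C. g C * x i)"
        proof (rule sum.cong[OF eqC])
          fix i assume "i \<in> C"
          then have "orbit \<sigma> i = C" using y orb_same by simp
          then show "g (orbit \<sigma> i) * x i = g C * x i" by simp
        qed
        then show ?thesis unfolding s_def sum_distrib_left .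
      qed
    qed
    finally show ?thesis .
  qed
  have "(\<Sum>g\<in>PiE Orbs (\<lambda>_. B). xi r ^ (\<Sum>i<n. g (orbit \<sigma> i) * x i))
      = (\<Sum>g\<in>PiE Orbs (\<lambda>_. B). \<Prod>C\<in>Orbs. (xi r ^ s C) ^ g C)"
    unfolding step3 power_sum by (simp add: power_mult[symmetric] mult.commute)
  also have "\<dots> = (\<Prod>C\<in>Orbs. \<Sum>b\<in>B. (xi r ^ s C) ^ b)"
    by (rule prod_sum_PiE[symmetric]) (auto simp: finO B_def)
  also have "\<dots> = (\<Prod>C\<in>Orbs. if r dvd s C then of_nat (r * m) + 1 else 1)"
    unfolding B_def using geo_xi[OF r] by simp
  also have "\<dots> = (\<Prod>C\<in>{C\<in>Orbs. r dvd s C}. of_nat (r * m) + 1)"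
    by (rule prod.inter_filter[OF finO, symmetric])
  also have "\<dots> = (of_nat (r * m + 1) :: complex) ^ ell r n (\<sigma>, x)"
    unfolding ellO by (simp add: add.commute)
  finally show ?thesis using step12 unfolding B_def by simp
qed

end

definition Zs :: "nat \<Rightarrow> nat \<Rightarrow> (nat \<Rightarrow> nat) set" where
  "Zs r n = {x. (\<forall>i. x i < r) \<and> (\<forall>i\<ge>n. x i = 0)}"

lemma Zs_0: "r > 0 \<Longrightarrow> Zs r 0 = {\<lambda>_. 0}"
  unfolding Zs_def by auto

lemma Zs_Suc: "Zs r (Suc n) = (\<lambda>(z, c). z(n := c)) ` (Zs r n \<times> {..<r})"
proof
  show "Zs r (Suc n) \<subseteq> (\<lambda>(z, c). z(n := c)) ` (Zs r n \<times> {..<r})"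
  proof
    fix x assume x: "x \<in> Zs r (Suc n)"
    have "x = (\<lambda>(z, c). z(n := c)) (x(n := 0), x n)" by simp
    moreover have "(x(n := 0), x n) \<in> Zs r n \<times> {..<r}"
      using x unfolding Zs_def by (auto simp: le_Suc_eq)
    ultimately show "x \<in> (\<lambda>(z, c). z(n := c)) ` (Zs r n \<times> {..<r})" by blast
  qed
  show "(\<lambda>(z, c). z(n := c)) ` (Zs r n \<times> {..<r}) \<subseteq> Zs r (Suc n)"
    unfolding Zs_def by auto
qed

lemma Zs_inj: "inj_on (\<lambda>(z, c). z(n := c)) (Zs r n \<times> {..<r})"
proof (rule inj_onI, clarify)
  fix z c z' c'
  assume z: "z \<in> Zs r n" "z' \<in> Zs r n" and e: "z(n := c) = z'(n := c')"
  have "c = c'" using fun_cong[OF e, of n] by simp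
  moreover have "z = z'"
  proof
    fix i show "z i = z' i"
    proof (cases "i = n")
      case True then show ?thesis using z unfolding Zs_def by auto
    next
      case False then show ?thesis using fun_cong[OF e, of i] by simp
    qed
  qed
  ultimately show "z = z' \<and> c = c'" by simp
qed

lemma Zs_sum:
  assumes r: "r > 0"
  shows "finite (Zs r n) \<and> (\<Sum>z\<in>Zs r n. \<Prod>i<n. g i (z i)) = (\<Prod>i<n. \<Sum>c<r. (g i c :: complex))"
proof (induction n)
  case 0
  then show ?case using Zs_0[OF r] by simp
next
  case (Suc n)
  have fin: "finite (Zs r (Suc n))" unfolding Zs_Suc using Suc by simp
  have "(\<Sum>z\<in>Zs r (Suc n). \<Prod>i<Suc n. g i (z i))
      = (\<Sum>(z, c)\<in>Zs r n \<times> {..<r}. \<Prod>i<Suc n. g i ((z(n := c)) i))"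
    unfolding Zs_Suc by (subst sum.reindex[OF Zs_inj]) (simp add: case_prod_unfold)
  also have "\<dots> = (\<Sum>(z, c)\<in>Zs r n \<times> {..<r}. (\<Prod>i<n. g i (z i)) * g n c)"
  proof (rule sum.cong[OF refl], clarify)
    fix z c
    have "(\<Prod>i<n. g i ((z(n := c)) i)) = (\<Prod>i<n. g i (z i))" by (rule prod.cong) auto
    then show "(\<Prod>i<Suc n. g i ((z(n := c)) i)) = (\<Prod>i<n. g i (z i)) * g n c" by simp
  qed
  also have "\<dots> = (\<Sum>z\<in>Zs r n. \<Sum>c<r. (\<Prod>i<n. g i (z i)) * g n c)"
    by (rule sum.cartesian_product[symmetric])
  also have "\<dots> = (\<Sum>z\<in>Zs r n. \<Prod>i<n. g i (z i)) * (\<Sum>c<r. g n c)"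
    by (rule sum_product[symmetric])
  also have "\<dots> = (\<Prod>i<Suc n. \<Sum>c<r. g i c)" using Suc by simp
  finally show ?case using fin by simp
qed

lemma W_eq: "W r n = {\<sigma>. \<sigma> permutes {..<n}} \<times> Zs r n"
  unfolding W_def Zs_def by auto

lemma finite_W: "r > 0 \<Longrightarrow> finite (W r n)"
  unfolding W_eq using Zs_sum[of r n "\<lambda>_ _. 1"] by (simp add: finite_permutations)

lemma W_ne: "r > 0 \<Longrightarrow> (id, \<lambda>_. 0) \<in> W r n"
  unfolding W_def by simp


lemma chi_tensor:
  assumes r: "r > 0" and sp: "\<sigma> permutes {..<n}"
  shows "chi r n m (\<sigma>, x) =
    (\<Sum>F\<in>PiE {..<n} (\<lambda>_. {..<Suc (r * m)}).
        if (\<forall>i<n. F (\<sigma> i) = F i) then xi r ^ (\<Sum>i<n. F i * x i) else 0)"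
  unfolding chi_def using tensor[OF sp r] by simp

lemma chi_conj:
  assumes r: "r > 0" and g: "g \<in> W r n" and h: "h \<in> W r n" and c: "c \<in> W r n"
    and e: "wmult r h g = wmult r c h"
  shows "chi r n m g = chi r n m c"
proof -
  obtain \<sigma> x where gg: "g = (\<sigma>, x)" by (cases g)
  obtain \<tau> y where hh: "h = (\<tau>, y)" by (cases h)
  obtain \<rho> z where cc: "c = (\<rho>, z)" by (cases c)
  have s: "\<sigma> permutes {..<n}" using g gg unfolding W_def by auto
  have t: "\<tau> permutes {..<n}" using h hh unfolding W_def by auto
  have p: "\<rho> permutes {..<n}" using c cc unfolding W_def by auto
  have e1: "\<sigma> \<circ> \<tau> = \<tau> \<circ> \<rho>" using e gg hh cc unfolding wmult_def by simp
  have e2: "\<And>i. (y i + x (\<tau> i)) mod r = (z i + y (\<rho> i)) mod r"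
    using e gg hh cc unfolding wmult_def by (simp add: fun_eq_iff)
  have e1': "\<And>i. \<sigma> (\<tau> i) = \<tau> (\<rho> i)" using e1 by (metis comp_apply)
  have tlt: "\<And>i. i < n \<Longrightarrow> \<tau> i < n" using permutes_in_image[OF t] by simp
  have ilt: "\<And>i. i < n \<Longrightarrow> inv \<tau> i < n"
    using permutes_in_image[OF permutes_inv[OF t]] by simp
  have plt: "\<And>i. i < n \<Longrightarrow> \<rho> i < n" using permutes_in_image[OF p] by simp
  let ?P = "PiE {..<n} (\<lambda>_. {..<Suc (r * m)})"
  let ?j = "\<lambda>F. restrict (F \<circ> \<tau>) {..<n}"
  let ?i = "\<lambda>G. restrict (G \<circ> inv \<tau>) {..<n}"
  have "(\<Sum>F\<in>?P. if (\<forall>i<n. F (\<sigma> i) = F i) then xi r ^ (\<Sum>i<n. F i * x i) else 0)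
      = (\<Sum>G\<in>?P. if (\<forall>i<n. G (\<rho> i) = G i) then xi r ^ (\<Sum>i<n. G i * z i) else 0)"
  proof (rule sum.reindex_bij_witness[where i = ?i and j = ?j])
    fix F assume F: "F \<in> ?P"
    show "?i (?j F) = F"
    proof
      fix a show "?i (?j F) a = F a"
        using F ilt by (cases "a < n") (auto simp: permutes_inverses[OF t] PiE_def extensional_def)
    qed
    show "?j F \<in> ?P" using F tlt by (auto simp: PiE_def Pi_def)
    have condeq: "(\<forall>i<n. ?j F (\<rho> i) = ?j F i) \<longleftrightarrow> (\<forall>i<n. F (\<sigma> i) = F i)"
    proof
      assume A: "\<forall>i<n. ?j F (\<rho> i) = ?j F i"
      show "\<forall>i<n. F (\<sigma> i) = F i"
      proof (intro allI impI)
        fix a assume a: "a < n"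
        have "?j F (\<rho> (inv \<tau> a)) = ?j F (inv \<tau> a)" using A ilt[OF a] by blast
        then have "F (\<tau> (\<rho> (inv \<tau> a))) = F (\<tau> (inv \<tau> a))" using plt ilt[OF a] by simp
        then show "F (\<sigma> a) = F a" using e1'[of "inv \<tau> a"] by (simp add: permutes_inverses[OF t])
      qed
    next
      assume A: "\<forall>i<n. F (\<sigma> i) = F i"
      show "\<forall>i<n. ?j F (\<rho> i) = ?j F i"
        using A tlt plt e1' by (simp add: e1'[symmetric])
    qed
    show "(if (\<forall>i<n. ?j F (\<rho> i) = ?j F i) then xi r ^ (\<Sum>i<n. ?j F i * z i) else 0)
        = (if (\<forall>i<n. F (\<sigma> i) = F i) then xi r ^ (\<Sum>i<n. F i * x i) else 0)"
    proof (cases "\<forall>i<n. F (\<sigma> i) = F i")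
      case False
      have nc: "\<not> (\<forall>i<n. ?j F (\<rho> i) = ?j F i)" using condeq False by blast
      show ?thesis by (simp only: if_not_P[OF nc] if_not_P[OF False])
    next
      case True
      define Ga where "Ga i = F (\<tau> i)" for i
      have Gp: "\<And>i. i < n \<Longrightarrow> Ga (\<rho> i) = Ga i"
        unfolding Ga_def using True tlt e1' by (metis)
      have sx: "(\<Sum>i<n. F i * x i) = (\<Sum>i<n. Ga i * x (\<tau> i))"
        unfolding Ga_def using sum.permute[OF t, of "\<lambda>i. F i * x i"] by (simp add: comp_def)
      have sz: "(\<Sum>i<n. ?j F i * z i) = (\<Sum>i<n. Ga i * z i)"
        unfolding Ga_def by simp
      have sy: "(\<Sum>i<n. Ga i * y (\<rho> i)) = (\<Sum>i<n. Ga i * y i)"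
      proof -
        have "(\<Sum>i<n. Ga i * y (\<rho> i)) = (\<Sum>i<n. Ga (\<rho> i) * y (\<rho> i))"
          using Gp by simp
        also have "\<dots> = (\<Sum>i<n. Ga i * y i)"
          using sum.permute[OF p, of "\<lambda>i. Ga i * y i"] by (simp add: comp_def)
        finally show ?thesis .
      qed
      have cg: "[(\<Sum>i<n. Ga i * (y i + x (\<tau> i))) = (\<Sum>i<n. Ga i * (z i + y (\<rho> i)))] (mod r)"
        by (rule cong_sum, rule cong_mult[OF cong_refl]) (simp add: cong_def e2)
      have x1: "(\<Sum>i<n. Ga i * (y i + x (\<tau> i))) = (\<Sum>i<n. Ga i * x (\<tau> i)) + (\<Sum>i<n. Ga i * y i)"
        by (simp add: distrib_left sum.distrib)
      have x2: "(\<Sum>i<n. Ga i * (z i + y (\<rho> i))) = (\<Sum>i<n. Ga i * z i) + (\<Sum>i<n. Ga i * y i)"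
        by (simp add: distrib_left sum.distrib sy)
      have "[(\<Sum>i<n. Ga i * x (\<tau> i)) + (\<Sum>i<n. Ga i * y i) = (\<Sum>i<n. Ga i * z i) + (\<Sum>i<n. Ga i * y i)] (mod r)"
        using cg unfolding x1 x2 .
      then have "[(\<Sum>i<n. Ga i * x (\<tau> i)) = (\<Sum>i<n. Ga i * z i)] (mod r)"
        by (simp add: cong_add_rcancel_nat)
      then have "xi r ^ (\<Sum>i<n. Ga i * x (\<tau> i)) = xi r ^ (\<Sum>i<n. Ga i * z i)"
        unfolding cong_def by (metis xi_pow_mod[OF r])
      then show ?thesis using True condeq sx sz by simp
    qed
  next
    fix G assume G: "G \<in> ?P"
    show "?j (?i G) = G"
    proof
      fix a show "?j (?i G) a = G a"
        using G tlt by (cases "a < n") (auto simp: permutes_inverses[OF t] PiE_def extensional_def)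
    qed
    show "?i G \<in> ?P" using G ilt by (auto simp: PiE_def Pi_def)
  qed
  then show ?thesis unfolding gg cc chi_tensor[OF r s] chi_tensor[OF r p] .
qed


lemma wmult_cancel:
  assumes r: "r > 0" and h: "h \<in> W r n" and g1: "g1 \<in> W r n" and g2: "g2 \<in> W r n"
    and e: "wmult r h g1 = wmult r h g2"
  shows "g1 = g2"
proof -
  obtain \<tau> y where hh: "h = (\<tau>, y)" by (cases h)
  obtain \<sigma>1 x1 where gg1: "g1 = (\<sigma>1, x1)" by (cases g1)
  obtain \<sigma>2 x2 where gg2: "g2 = (\<sigma>2, x2)" by (cases g2)
  have t: "\<tau> permutes {..<n}" using h hh unfolding W_def by auto
  have x1r: "\<And>i. x1 i < r" and x2r: "\<And>i. x2 i < r" using g1 g2 gg1 gg2 unfolding W_def by auto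
  have ef: "\<sigma>1 \<circ> \<tau> = \<sigma>2 \<circ> \<tau>" using e hh gg1 gg2 unfolding wmult_def by simp
  have es: "\<And>i. (y i + x1 (\<tau> i)) mod r = (y i + x2 (\<tau> i)) mod r"
    using e hh gg1 gg2 unfolding wmult_def by (simp add: fun_eq_iff)
  have "\<sigma>1 = \<sigma>2"
  proof
    fix a
    have "(\<sigma>1 \<circ> \<tau>) (inv \<tau> a) = (\<sigma>2 \<circ> \<tau>) (inv \<tau> a)" using ef by simp
    then show "\<sigma>1 a = \<sigma>2 a" by (simp add: permutes_inverses[OF t])
  qed
  moreover have "x1 = x2"
  proof
    fix a
    have "(y (inv \<tau> a) + x1 a) mod r = (y (inv \<tau> a) + x2 a) mod r"
      using es[of "inv \<tau> a"] by (simp add: permutes_inverses[OF t])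
    then have "[x1 a = x2 a] (mod r)"
      unfolding cong_def[symmetric] by (simp add: cong_add_lcancel_nat)
    then show "x1 a = x2 a" using x1r x2r unfolding cong_def by simp
  qed
  ultimately show ?thesis using gg1 gg2 by simp
qed

lemma conj_exists:
  assumes r: "r > 0" and h: "h \<in> W r n" and c: "c \<in> W r n"
  shows "\<exists>g\<in>W r n. wmult r h g = wmult r c h"
proof -
  obtain \<tau> y where hh: "h = (\<tau>, y)" by (cases h)
  obtain \<rho> z where cc: "c = (\<rho>, z)" by (cases c)
  have t: "\<tau> permutes {..<n}" using h hh unfolding W_def by auto
  have p: "\<rho> permutes {..<n}" using c cc unfolding W_def by auto
  have yr: "\<And>i. y i < r" and y0: "\<And>i. i \<ge> n \<Longrightarrow> y i = 0" using h hh unfolding W_def by auto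
  have z0: "\<And>i. i \<ge> n \<Longrightarrow> z i = 0" using c cc unfolding W_def by auto
  define g where "g = (\<tau> \<circ> \<rho> \<circ> inv \<tau>,
      \<lambda>j. (z (inv \<tau> j) + y (\<rho> (inv \<tau> j)) + (r - y (inv \<tau> j))) mod r)"
  have "g \<in> W r n"
  proof -
    have "\<tau> \<circ> \<rho> \<circ> inv \<tau> permutes {..<n}"
      by (intro permutes_compose permutes_inv t p)
    moreover have "\<forall>j\<ge>n. (z (inv \<tau> j) + y (\<rho> (inv \<tau> j)) + (r - y (inv \<tau> j))) mod r = 0"
    proof (intro allI impI)
      fix j assume j: "j \<ge> n"
      have "inv \<tau> j = j" using permutes_not_in[OF permutes_inv[OF t], of j] j by simp
      moreover have "\<rho> j = j" using permutes_not_in[OF p, of j] j by simp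
      ultimately show "(z (inv \<tau> j) + y (\<rho> (inv \<tau> j)) + (r - y (inv \<tau> j))) mod r = 0"
        using j z0 y0 by simp
    qed
    ultimately show ?thesis unfolding g_def W_def using r by auto
  qed
  moreover have "wmult r h g = wmult r c h"
  proof -
    have f: "\<tau> \<circ> \<rho> \<circ> inv \<tau> \<circ> \<tau> = \<tau> \<circ> \<rho>"
      by (simp add: fun_eq_iff permutes_inverses[OF t])
    have s: "(y i + (z i + y (\<rho> i) + (r - y i)) mod r) mod r = (z i + y (\<rho> i)) mod r" for i
    proof -
      have "(y i + (z i + y (\<rho> i) + (r - y i)) mod r) mod r = (y i + (z i + y (\<rho> i) + (r - y i))) mod r"
        by (simp add: mod_add_right_eq)
      also have "y i + (z i + y (\<rho> i) + (r - y i)) = (z i + y (\<rho> i)) + r" using yr[of i] by simp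
      finally show ?thesis by simp
    qed
    show ?thesis unfolding hh cc g_def wmult_def using f s
      by (simp add: permutes_inverses[OF t] fun_eq_iff)
  qed
  ultimately show ?thesis by blast
qed

lemma frobenius:
  assumes r: "r > 0"
    and cl: "\<forall>g\<in>W r n. \<forall>h\<in>W r n. \<forall>c\<in>W r n. wmult r h g = wmult r c h \<longrightarrow> f g = f c"
  shows "inner r n f (chi_lambda r n k) =
     (\<Sum>c\<in>Hsub r n k. f c * cnj (psi r n k c)) / of_nat (card (Hsub r n k))"
proof -
  let ?W = "W r n" and ?H = "Hsub r n k"
  have HW: "?H \<subseteq> ?W" unfolding Hsub_def by auto
  have finW: "finite ?W" using finite_W[OF r] .
  have finH: "finite ?H" using finite_subset[OF HW finW] .
  have Wne: "card ?W \<noteq> 0" using W_ne[OF r] finW by auto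
  have inner_sum: "(\<Sum>g\<in>?W. (if wmult r h g = wmult r c h then f g * cnj (psi r n k c) else 0))
      = f c * cnj (psi r n k c)" if h: "h \<in> ?W" and c: "c \<in> ?H" for h c
  proof -
    have cW: "c \<in> ?W" using c HW by auto
    obtain g0 where g0: "g0 \<in> ?W" "wmult r h g0 = wmult r c h" using conj_exists[OF r h cW] by blast
    have iff: "\<And>g. g \<in> ?W \<Longrightarrow> (wmult r h g = wmult r c h) \<longleftrightarrow> g = g0"
      using wmult_cancel[OF r h _ g0(1)] g0(2) by auto
    have "(\<Sum>g\<in>?W. (if wmult r h g = wmult r c h then f g * cnj (psi r n k c) else 0))
        = (\<Sum>g\<in>?W. (if g = g0 then f g * cnj (psi r n k c) else 0))"
      by (rule sum.cong[OF refl]) (simp add: iff)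
    also have "\<dots> = f g0 * cnj (psi r n k c)" using g0(1) finW by simp
    also have "f g0 = f c" using cl g0 h cW by blast
    finally show ?thesis .
  qed
  have "inner r n f (chi_lambda r n k) =
      (\<Sum>g\<in>?W. \<Sum>h\<in>?W. \<Sum>c\<in>?H. (if wmult r h g = wmult r c h then f g * cnj (psi r n k c) else 0))
        / of_nat (card ?H) / of_nat (card ?W)"
  proof -
    have "inner r n f (chi_lambda r n k) =
      (\<Sum>g\<in>?W. \<Sum>h\<in>?W. \<Sum>c\<in>?H. f g * cnj (if wmult r h g = wmult r c h then psi r n k c else 0))
        / of_nat (card ?H) / of_nat (card ?W)"
      unfolding inner_def chi_lambda_def
      by (simp add: cnj_sum sum_divide_distrib sum_distrib_left)
    also have "(\<Sum>g\<in>?W. \<Sum>h\<in>?W. \<Sum>c\<in>?H. f g * cnj (if wmult r h g = wmult r c h then psi r n k c else 0))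
      = (\<Sum>g\<in>?W. \<Sum>h\<in>?W. \<Sum>c\<in>?H. (if wmult r h g = wmult r c h then f g * cnj (psi r n k c) else 0))"
      by (intro sum.cong refl) simp
    finally show ?thesis .
  qed
  also have "(\<Sum>g\<in>?W. \<Sum>h\<in>?W. \<Sum>c\<in>?H. (if wmult r h g = wmult r c h then f g * cnj (psi r n k c) else 0))
      = (\<Sum>h\<in>?W. \<Sum>c\<in>?H. \<Sum>g\<in>?W. (if wmult r h g = wmult r c h then f g * cnj (psi r n k c) else 0))"
  proof -
    have "(\<Sum>g\<in>?W. \<Sum>h\<in>?W. \<Sum>c\<in>?H. (if wmult r h g = wmult r c h then f g * cnj (psi r n k c) else 0))
      = (\<Sum>h\<in>?W. \<Sum>g\<in>?W. \<Sum>c\<in>?H. (if wmult r h g = wmult r c h then f g * cnj (psi r n k c) else 0))"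
      by (rule sum.swap)
    also have "\<dots> = (\<Sum>h\<in>?W. \<Sum>c\<in>?H. \<Sum>g\<in>?W. (if wmult r h g = wmult r c h then f g * cnj (psi r n k c) else 0))"
      by (rule sum.cong[OF refl], rule sum.swap)
    finally show ?thesis .
  qed
  also have "\<dots> = (\<Sum>h\<in>?W. \<Sum>c\<in>?H. f c * cnj (psi r n k c))"
    by (rule sum.cong[OF refl], rule sum.cong[OF refl]) (simp add: inner_sum)
  also have "\<dots> = of_nat (card ?W) * (\<Sum>c\<in>?H. f c * cnj (psi r n k c))" by simp
  finally show ?thesis using Wne by simp
qed

definition restr :: "(nat \<Rightarrow> nat) \<Rightarrow> nat set \<Rightarrow> nat \<Rightarrow> nat" where
  "restr \<rho> S i = (if i \<in> S then \<rho> i else i)"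

definition Hp :: "nat \<Rightarrow> nat \<Rightarrow> (nat \<Rightarrow> nat) set" where
  "Hp n p = {\<rho>. \<rho> permutes {..<n} \<and> \<rho> ` {..<p} \<subseteq> {..<p}}"

lemma Hp_images:
  assumes "\<rho> \<in> Hp n p" "p \<le> n"
  shows "\<rho> ` {..<p} = {..<p}" "\<rho> ` {p..<n} = {p..<n}"
proof -
  have rp: "\<rho> permutes {..<n}" and sub: "\<rho> ` {..<p} \<subseteq> {..<p}" using assms(1) unfolding Hp_def by auto
  have inj: "inj \<rho>" using permutes_inj[OF rp] .
  show A1: "\<rho> ` {..<p} = {..<p}"
    by (rule endo_inj_surj[OF _ sub]) (use inj in \<open>auto intro: inj_on_subset\<close>)
  have "\<rho> ` {..<n} = {..<n}" using permutes_image[OF rp] .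
  moreover have "{p..<n} = {..<n} - {..<p}" using assms(2) by auto
  moreover have "\<rho> ` ({..<n} - {..<p}) = \<rho> ` {..<n} - \<rho> ` {..<p}" by (rule image_set_diff[OF inj])
  ultimately show "\<rho> ` {p..<n} = {p..<n}" using A1 by simp
qed

lemma restr_permutes:
  assumes "\<rho> permutes T" "\<rho> ` S = S"
  shows "restr \<rho> S permutes S"
proof (rule bij_imp_permutes)
  have "inj_on \<rho> S" using permutes_inj[OF assms(1)] inj_on_subset[of \<rho> UNIV S] by simp
  then have "bij_betw \<rho> S S" using assms by (simp add: bij_betw_def)
  then show "bij_betw (restr \<rho> S) S S"
    by (rule bij_betw_cong[THEN iffD1, rotated]) (simp add: restr_def)
qed (simp add: restr_def)

lemma Hp_bij:
  assumes pn: "p \<le> n"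
  shows "bij_betw (\<lambda>(\<rho>1, \<rho>2). \<rho>1 \<circ> \<rho>2) ({\<rho>. \<rho> permutes {..<p}} \<times> {\<rho>. \<rho> permutes {p..<n}}) (Hp n p)"
proof (rule bij_betw_byWitness[where f' = "\<lambda>\<rho>. (restr \<rho> {..<p}, restr \<rho> {p..<n})"])
  show "\<forall>a\<in>{\<rho>. \<rho> permutes {..<p}} \<times> {\<rho>. \<rho> permutes {p..<n}}.
      (restr ((\<lambda>(\<rho>1, \<rho>2). \<rho>1 \<circ> \<rho>2) a) {..<p}, restr ((\<lambda>(\<rho>1, \<rho>2). \<rho>1 \<circ> \<rho>2) a) {p..<n}) = a"
  proof
    fix a assume "a \<in> {\<rho>. \<rho> permutes {..<p}} \<times> {\<rho>. \<rho> permutes {p..<n}}"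
    then obtain \<rho>1 \<rho>2 where ae: "a = (\<rho>1, \<rho>2)" and r1: "\<rho>1 permutes {..<p}" and r2: "\<rho>2 permutes {p..<n}"
      by blast
    have a: "restr (\<rho>1 \<circ> \<rho>2) {..<p} = \<rho>1"
    proof
      fix i show "restr (\<rho>1 \<circ> \<rho>2) {..<p} i = \<rho>1 i"
      proof (cases "i < p")
        case True
        then have "\<rho>2 i = i" using permutes_not_in[OF r2, of i] by simp
        then show ?thesis using True by (simp add: restr_def)
      next
        case False
        then have "\<rho>1 i = i" using permutes_not_in[OF r1, of i] by simp
        then show ?thesis using False by (simp add: restr_def)
      qed
    qed
    have b: "restr (\<rho>1 \<circ> \<rho>2) {p..<n} = \<rho>2"
    proof
      fix i show "restr (\<rho>1 \<circ> \<rho>2) {p..<n} i = \<rho>2 i"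
      proof (cases "i \<in> {p..<n}")
        case True
        then have "\<rho>2 i \<in> {p..<n}" using permutes_in_image[OF r2] by simp
        then show ?thesis using True permutes_not_in[OF r1, of "\<rho>2 i"] by (simp add: restr_def)
      next
        case False
        then show ?thesis using permutes_not_in[OF r2, of i] by (auto simp: restr_def)
      qed
    qed
    show "(restr ((\<lambda>(\<rho>1, \<rho>2). \<rho>1 \<circ> \<rho>2) a) {..<p}, restr ((\<lambda>(\<rho>1, \<rho>2). \<rho>1 \<circ> \<rho>2) a) {p..<n}) = a"
      using a b ae by simp
  qed
  show "\<forall>a'\<in>Hp n p. (\<lambda>(\<rho>1, \<rho>2). \<rho>1 \<circ> \<rho>2) (restr a' {..<p}, restr a' {p..<n}) = a'"
  proof
    fix \<rho> assume r: "\<rho> \<in> Hp n p"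
    have rp: "\<rho> permutes {..<n}" using r unfolding Hp_def by auto
    have i2: "\<And>i. i \<in> {p..<n} \<Longrightarrow> \<rho> i \<in> {p..<n}" using Hp_images(2)[OF r pn] by blast
    show "(\<lambda>(\<rho>1, \<rho>2). \<rho>1 \<circ> \<rho>2) (restr \<rho> {..<p}, restr \<rho> {p..<n}) = \<rho>"
    proof
      fix i show "(\<lambda>(\<rho>1, \<rho>2). \<rho>1 \<circ> \<rho>2) (restr \<rho> {..<p}, restr \<rho> {p..<n}) i = \<rho> i"
      proof (cases "i \<in> {p..<n}")
        case True
        then show ?thesis using i2[OF True] by (auto simp: restr_def)
      next
        case False
        then show ?thesis using permutes_not_in[OF rp, of i] by (auto simp: restr_def)
      qed
    qed
  qed
  show "(\<lambda>(\<rho>1, \<rho>2). \<rho>1 \<circ> \<rho>2) ` ({\<rho>. \<rho> permutes {..<p}} \<times> {\<rho>. \<rho> permutes {p..<n}}) \<subseteq> Hp n p"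
  proof clarify
    fix \<rho>1 \<rho>2 assume r1: "\<rho>1 permutes {..<p}" and r2: "\<rho>2 permutes {p..<n}"
    have "\<rho>1 permutes {..<n}" using permutes_subset[OF r1] pn by auto
    moreover have "\<rho>2 permutes {..<n}" by (rule permutes_subset[OF r2]) auto
    ultimately have "\<rho>1 \<circ> \<rho>2 permutes {..<n}" by (rule permutes_compose[rotated])
    moreover have "(\<rho>1 \<circ> \<rho>2) ` {..<p} \<subseteq> {..<p}"
      using permutes_not_in[OF r2] permutes_in_image[OF r1] by auto
    ultimately show "\<rho>1 \<circ> \<rho>2 \<in> Hp n p" unfolding Hp_def by blast
  qed
  show "(\<lambda>\<rho>. (restr \<rho> {..<p}, restr \<rho> {p..<n})) ` Hp n p \<subseteq> {\<rho>. \<rho> permutes {..<p}} \<times> {\<rho>. \<rho> permutes {p..<n}}"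
  proof
    fix x assume "x \<in> (\<lambda>\<rho>. (restr \<rho> {..<p}, restr \<rho> {p..<n})) ` Hp n p"
    then obtain \<rho> where r: "\<rho> \<in> Hp n p" and xe: "x = (restr \<rho> {..<p}, restr \<rho> {p..<n})" by blast
    have rp: "\<rho> permutes {..<n}" using r unfolding Hp_def by auto
    have "restr \<rho> {..<p} permutes {..<p}" by (rule restr_permutes[OF rp Hp_images(1)[OF r pn]])
    moreover have "restr \<rho> {p..<n} permutes {p..<n}" by (rule restr_permutes[OF rp Hp_images(2)[OF r pn]])
    ultimately show "x \<in> {\<rho>. \<rho> permutes {..<p}} \<times> {\<rho>. \<rho> permutes {p..<n}}" using xe by simp
  qed
qed


lemma card_split:
  assumes pn: "p \<le> n" and r1: "\<rho>1 permutes {..<p}" and r2: "\<rho>2 permutes {p..<n}"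
  shows "card {F \<in> PiE {..<n} (\<lambda>i. if i < p then S0 else S1). \<forall>i<n. F ((\<rho>1 \<circ> \<rho>2) i) = F i}
       = cnt {..<p} S0 \<rho>1 * cnt {p..<n} S1 \<rho>2"
proof -
  let ?X = "{F \<in> PiE {..<n} (\<lambda>i. if i < p then S0 else S1). \<forall>i<n. F ((\<rho>1 \<circ> \<rho>2) i) = F i}"
  let ?Y1 = "{F \<in> PiE {..<p} (\<lambda>_. S0). \<forall>i\<in>{..<p}. F (\<rho>1 i) = F i}"
  let ?Y2 = "{F \<in> PiE {p..<n} (\<lambda>_. S1). \<forall>i\<in>{p..<n}. F (\<rho>2 i) = F i}"
  have c1: "\<And>i. i < p \<Longrightarrow> (\<rho>1 \<circ> \<rho>2) i = \<rho>1 i \<and> \<rho>1 i < p"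
    using permutes_not_in[OF r2] permutes_in_image[OF r1] by simp
  have c2: "\<And>i. p \<le> i \<Longrightarrow> i < n \<Longrightarrow> (\<rho>1 \<circ> \<rho>2) i = \<rho>2 i \<and> p \<le> \<rho>2 i \<and> \<rho>2 i < n"
  proof -
    fix i assume i: "p \<le> i" "i < n"
    then have "\<rho>2 i \<in> {p..<n}" using permutes_in_image[OF r2] by simp
    then show "(\<rho>1 \<circ> \<rho>2) i = \<rho>2 i \<and> p \<le> \<rho>2 i \<and> \<rho>2 i < n"
      using permutes_not_in[OF r1, of "\<rho>2 i"] by simp
  qed
  have "bij_betw (\<lambda>F. (restrict F {..<p}, restrict F {p..<n})) ?X (?Y1 \<times> ?Y2)"
  proof (rule bij_betw_byWitness[where f' = "\<lambda>(F1, F2). (\<lambda>i. if i < p then F1 i else F2 i)"])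
    show "\<forall>F\<in>?X. (\<lambda>(F1, F2). (\<lambda>i. if i < p then F1 i else F2 i)) (restrict F {..<p}, restrict F {p..<n}) = F"
    proof
      fix F assume F: "F \<in> ?X"
      show "(\<lambda>(F1, F2). (\<lambda>i. if i < p then F1 i else F2 i)) (restrict F {..<p}, restrict F {p..<n}) = F"
      proof
        fix i show "(\<lambda>(F1, F2). (\<lambda>i. if i < p then F1 i else F2 i)) (restrict F {..<p}, restrict F {p..<n}) i = F i"
          using F pn by (cases "i < n") (auto simp: PiE_def extensional_def)
      qed
    qed
    show "\<forall>a\<in>?Y1 \<times> ?Y2. (\<lambda>F. (restrict F {..<p}, restrict F {p..<n})) ((\<lambda>(F1, F2). (\<lambda>i. if i < p then F1 i else F2 i)) a) = a"
    proof
      fix a assume a: "a \<in> ?Y1 \<times> ?Y2"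
      then obtain F1 F2 where ae: "a = (F1, F2)" and F1: "F1 \<in> ?Y1" and F2: "F2 \<in> ?Y2" by blast
      have "restrict (\<lambda>i. if i < p then F1 i else F2 i) {..<p} = F1"
      proof
        fix i show "restrict (\<lambda>i. if i < p then F1 i else F2 i) {..<p} i = F1 i"
          using F1 by (cases "i < p") (auto simp: PiE_def extensional_def)
      qed
      moreover have "restrict (\<lambda>i. if i < p then F1 i else F2 i) {p..<n} = F2"
      proof
        fix i show "restrict (\<lambda>i. if i < p then F1 i else F2 i) {p..<n} i = F2 i"
          using F2 by (cases "i \<in> {p..<n}") (auto simp: PiE_def extensional_def)
      qed
      ultimately show "(\<lambda>F. (restrict F {..<p}, restrict F {p..<n})) ((\<lambda>(F1, F2). (\<lambda>i. if i < p then F1 i else F2 i)) a) = a"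
        using ae by simp
    qed
    show "(\<lambda>F. (restrict F {..<p}, restrict F {p..<n})) ` ?X \<subseteq> ?Y1 \<times> ?Y2"
    proof
      fix y assume "y \<in> (\<lambda>F. (restrict F {..<p}, restrict F {p..<n})) ` ?X"
      then obtain F where F: "F \<in> ?X" and ye: "y = (restrict F {..<p}, restrict F {p..<n})" by (rule imageE)
      have Fpi: "F \<in> PiE {..<n} (\<lambda>i. if i < p then S0 else S1)" using F by simp
      have Fc: "\<forall>i<n. F ((\<rho>1 \<circ> \<rho>2) i) = F i" using F by simp
      have "restrict F {..<p} \<in> ?Y1"
      proof -
        have "\<And>x. x < p \<Longrightarrow> F x \<in> S0"
        proof -
          fix x assume x: "x < p"
          then have "x \<in> {..<n}" using pn by simp
          then have "F x \<in> (if x < p then S0 else S1)" by (rule PiE_mem[OF Fpi])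
          then show "F x \<in> S0" using x by simp
        qed
        then have "restrict F {..<p} \<in> PiE {..<p} (\<lambda>_. S0)" by simp
        moreover have "\<forall>i\<in>{..<p}. restrict F {..<p} (\<rho>1 i) = restrict F {..<p} i"
        proof
          fix i assume i: "i \<in> {..<p}"
          then have "i < n" using pn by simp
          then have "F ((\<rho>1 \<circ> \<rho>2) i) = F i" using Fc by blast
          then show "restrict F {..<p} (\<rho>1 i) = restrict F {..<p} i" using c1[of i] i by simp
        qed
        ultimately show ?thesis by blast
      qed
      moreover have "restrict F {p..<n} \<in> ?Y2"
      proof -
        have "\<And>x. x \<in> {p..<n} \<Longrightarrow> F x \<in> S1"
        proof -
          fix x assume x: "x \<in> {p..<n}"
          then have "x \<in> {..<n}" by simp
          then have "F x \<in> (if x < p then S0 else S1)" by (rule PiE_mem[OF Fpi])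
          then show "F x \<in> S1" using x by simp
        qed
        then have "restrict F {p..<n} \<in> PiE {p..<n} (\<lambda>_. S1)" by simp
        moreover have "\<forall>i\<in>{p..<n}. restrict F {p..<n} (\<rho>2 i) = restrict F {p..<n} i"
        proof
          fix i assume i: "i \<in> {p..<n}"
          then have "i < n" by simp
          then have "F ((\<rho>1 \<circ> \<rho>2) i) = F i" using Fc by blast
          then show "restrict F {p..<n} (\<rho>2 i) = restrict F {p..<n} i" using c2[of i] i by simp
        qed
        ultimately show ?thesis by blast
      qed
      ultimately show "y \<in> ?Y1 \<times> ?Y2" using ye by simp
    qed
    show "(\<lambda>(F1, F2). (\<lambda>i. if i < p then F1 i else F2 i)) ` (?Y1 \<times> ?Y2) \<subseteq> ?X"
    proof
      fix y assume "y \<in> (\<lambda>(F1, F2). (\<lambda>i. if i < p then F1 i else F2 i)) ` (?Y1 \<times> ?Y2)"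
      then obtain a where a: "a \<in> ?Y1 \<times> ?Y2" and ya: "y = (\<lambda>(F1, F2). (\<lambda>i. if i < p then F1 i else F2 i)) a"
        by (rule imageE)
      obtain F1 F2 where ae: "a = (F1, F2)" by (cases a)
      have F1: "F1 \<in> ?Y1" and F2: "F2 \<in> ?Y2" using a ae by auto
      have F1pi: "F1 \<in> PiE {..<p} (\<lambda>_. S0)" and F1c: "\<forall>i\<in>{..<p}. F1 (\<rho>1 i) = F1 i"
        using F1 by simp_all
      have F2pi: "F2 \<in> PiE {p..<n} (\<lambda>_. S1)" and F2c: "\<forall>i\<in>{p..<n}. F2 (\<rho>2 i) = F2 i"
        using F2 by simp_all
      have ye: "y = (\<lambda>i. if i < p then F1 i else F2 i)" using ya ae by simp
      have "y \<in> PiE {..<n} (\<lambda>i. if i < p then S0 else S1)"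
      proof (rule PiE_I)
        fix x assume x: "x \<in> {..<n}"
        show "y x \<in> (if x < p then S0 else S1)"
        proof (cases "x < p")
          case True
          then show ?thesis using PiE_mem[OF F1pi, of x] ye by simp
        next
          case False
          then show ?thesis using PiE_mem[OF F2pi, of x] ye x by simp
        qed
      next
        fix x assume x: "x \<notin> {..<n}"
        then have "x \<notin> {..<p}" "x \<notin> {p..<n}" using pn by auto
        then show "y x = undefined" using ye PiE_arb[OF F2pi] pn x by simp
      qed
      moreover have "\<forall>i<n. y ((\<rho>1 \<circ> \<rho>2) i) = y i"
      proof (intro allI impI)
        fix i assume i: "i < n"
        show "y ((\<rho>1 \<circ> \<rho>2) i) = y i"
        proof (cases "i < p")
          case True
          have "F1 (\<rho>1 i) = F1 i" using F1c True by simp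
          then show ?thesis using c1[OF True] True unfolding ye by simp
        next
          case False
          have "F2 (\<rho>2 i) = F2 i" using F2c False i by simp
          then show ?thesis using c2[of i] i False unfolding ye by simp
        qed
      qed
      ultimately show "y \<in> ?X" by blast
    qed
  qed
  then have "card ?X = card (?Y1 \<times> ?Y2)" by (rule bij_betw_same_card)
  then show ?thesis unfolding cnt_def by (simp add: card_cartesian_product)
qed

lemma cnj_xi_pow: assumes r: "r > 0" shows "cnj (xi r) ^ a = xi r ^ ((r - 1) * a)"
proof -
  have x1: "xi r * cnj (xi r) = 1" by (simp add: xi_def cis_cnj cis_mult)
  have x2: "xi r ^ (r - 1) * xi r = 1"
    using xi_pow_r[OF r] r by (metis Suc_diff_1 power_Suc2)
  have nz: "xi r \<noteq> 0" using x1 by auto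
  have "cnj (xi r) = xi r ^ (r - 1)"
    using x1 x2 nz by (metis mult.commute mult_cancel_left)
  then show ?thesis by (simp add: power_mult)
qed

lemma card_S0:
  assumes r: "r > 0"
  shows "card {b. b < Suc (r * m) \<and> r dvd b} = Suc m"
proof -
  have "{b. b < Suc (r * m) \<and> r dvd b} = (\<lambda>a. r * a) ` {..m}"
  proof
    show "{b. b < Suc (r * m) \<and> r dvd b} \<subseteq> (\<lambda>a. r * a) ` {..m}"
    proof
      fix b assume b: "b \<in> {b. b < Suc (r * m) \<and> r dvd b}"
      then obtain a where a: "b = r * a" by blast
      have "b < Suc (r * m)" using b by simp
      then have "r * a \<le> r * m" using a by linarith
      then have "a \<le> m" using r by simp
      then show "b \<in> (\<lambda>a. r * a) ` {..m}" using a by blast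
    qed
    show "(\<lambda>a. r * a) ` {..m} \<subseteq> {b. b < Suc (r * m) \<and> r dvd b}"
      by (auto intro: le_imp_less_Suc mult_le_mono2)
  qed
  moreover have "inj_on (\<lambda>a. r * a) {..m}" using r by (simp add: inj_on_def)
  ultimately show ?thesis by (simp add: card_image)
qed

lemma card_S1:
  assumes r: "r \<ge> 2"
  shows "card {b. b < Suc (r * m) \<and> r dvd (b + (r - 1))} = m"
proof -
  have "{b. b < Suc (r * m) \<and> r dvd (b + (r - 1))} = (\<lambda>a. r * a + 1) ` {..<m}"
  proof
    show "{b. b < Suc (r * m) \<and> r dvd (b + (r - 1))} \<subseteq> (\<lambda>a. r * a + 1) ` {..<m}"
    proof
      fix b assume b: "b \<in> {b. b < Suc (r * m) \<and> r dvd (b + (r - 1))}"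
      then obtain q where q: "b + (r - 1) = r * q" by blast
      have "q \<ge> 1" using q r by (cases q) auto
      then obtain a where a: "q = Suc a" by (cases q) auto
      have ba: "b = r * a + 1" using q a r by (simp add: algebra_simps)
      then have "a < m" using b by simp
      then show "b \<in> (\<lambda>a. r * a + 1) ` {..<m}" using ba by blast
    qed
    show "(\<lambda>a. r * a + 1) ` {..<m} \<subseteq> {b. b < Suc (r * m) \<and> r dvd (b + (r - 1))}"
    proof
      fix b assume "b \<in> (\<lambda>a. r * a + 1) ` {..<m}"
      then obtain a where a: "a < m" "b = r * a + 1" by blast
      have "b + (r - 1) = r * Suc a" using a r by simp
      moreover have "r * a + 1 < Suc (r * m)" using a r by simp
      ultimately show "b \<in> {b. b < Suc (r * m) \<and> r dvd (b + (r - 1))}" using a by simp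
    qed
  qed
  moreover have "inj_on (\<lambda>a. r * a + 1) {..<m}" using r by (simp add: inj_on_def)
  ultimately show ?thesis by (simp add: card_image)
qed

lemma prod_if_const:
  "(\<Prod>i<n. if P i then (c :: complex) else 0) = (if \<forall>i<n. P i then c ^ n else 0)"
proof (cases "\<forall>i<n. P i")
  case True
  then have "(\<Prod>i<n. if P i then c else 0) = (\<Prod>i<n. c)" by (intro prod.cong) auto
  then show ?thesis using True by simp
next
  case False
  then obtain j where j: "j < n" "\<not> P j" by blast
  then have "(\<Prod>i<n. if P i then c else 0) = 0" by (intro prod_zero) auto
  then show ?thesis using False by simp
qed


lemma prop_aux: "(P1 \<and> P2 \<longleftrightarrow> Q) \<Longrightarrow> ((P1 \<and> E) \<and> P2 \<longleftrightarrow> Q \<and> E)" by blast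

lemma prop_aux2: "(A \<and> D \<longleftrightarrow> B) \<Longrightarrow> (A \<and> C \<and> D) = (B \<and> C)" by blast

definition S0 :: "nat \<Rightarrow> nat \<Rightarrow> nat set" where "S0 r m = {b. b < Suc (r * m) \<and> r dvd b}"
definition S1 :: "nat \<Rightarrow> nat \<Rightarrow> nat set" where "S1 r m = {b. b < Suc (r * m) \<and> r dvd (b + (r - 1))}"

lemma zsum_rho:
  assumes r: "r > 0" and pn: "p \<le> n" and rp: "\<rho> permutes {..<n}"
  shows "(\<Sum>z\<in>Zs r n. chi r n m (\<rho>, z) * cnj (of_int (sign (\<lambda>i. if p \<le> i then \<rho> i else i)) * xi r ^ (\<Sum>i\<in>{p..<n}. z i)))
   = of_int (sign (\<lambda>i. if p \<le> i then \<rho> i else i)) * of_nat r ^ n *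
     of_nat (card {F \<in> PiE {..<n} (\<lambda>i. if i < p then S0 r m else S1 r m). \<forall>i<n. F (\<rho> i) = F i})"
proof -
  define sg :: complex where "sg = of_int (sign (\<lambda>i. if p \<le> i then \<rho> i else i))"
  define e where "e F i = F i + (if p \<le> i then r - 1 else 0)" for F :: "nat \<Rightarrow> nat" and i
  let ?P = "PiE {..<n} (\<lambda>_. {..<Suc (r * m)})"
  let ?c = "\<lambda>F. \<forall>i<n. F (\<rho> i) = F i"
  have finP: "finite ?P" by (simp add: finite_PiE)
  have finZ: "finite (Zs r n)" using Zs_sum[OF r, of n "\<lambda>_ _. 1"] by simp
  have key1: "xi r ^ (\<Sum>i<n. F i * z i) * xi r ^ ((r - 1) * (\<Sum>i\<in>{p..<n}. z i))
      = (\<Prod>i<n. (xi r ^ e F i) ^ z i)" for F z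
  proof -
    have a: "(\<Sum>i\<in>{p..<n}. z i) = (\<Sum>i<n. if p \<le> i then z i else 0)"
    proof -
      have "(\<Sum>i<n. if p \<le> i then z i else 0) = (\<Sum>i\<in>{i\<in>{..<n}. p \<le> i}. z i)"
        by (rule sum.inter_filter[symmetric]) simp
      moreover have "{i\<in>{..<n}. p \<le> i} = {p..<n}" by auto
      ultimately show ?thesis by simp
    qed
    have b: "(r - 1) * (\<Sum>i<n. if p \<le> i then z i else 0) = (\<Sum>i<n. (if p \<le> i then r - 1 else 0) * z i)"
      unfolding sum_distrib_left by (rule sum.cong) auto
    have c: "(\<Sum>i<n. F i * z i) + (\<Sum>i<n. (if p \<le> i then r - 1 else 0) * z i) = (\<Sum>i<n. e F i * z i)"
      unfolding e_def sum.distrib[symmetric] by (simp add: distrib_right)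
    have "xi r ^ (\<Sum>i<n. F i * z i) * xi r ^ ((r - 1) * (\<Sum>i\<in>{p..<n}. z i)) = xi r ^ (\<Sum>i<n. e F i * z i)"
      unfolding power_add[symmetric] a b c ..
    also have "\<dots> = (\<Prod>i<n. (xi r ^ e F i) ^ z i)"
      unfolding power_sum by (simp add: power_mult)
    finally show ?thesis .
  qed
  have step1: "chi r n m (\<rho>, z) * cnj (sg * xi r ^ (\<Sum>i\<in>{p..<n}. z i))
      = sg * (\<Sum>F\<in>?P. if ?c F then (\<Prod>i<n. (xi r ^ e F i) ^ z i) else 0)" for z
  proof -
    have "cnj (sg * xi r ^ (\<Sum>i\<in>{p..<n}. z i)) = sg * xi r ^ ((r - 1) * (\<Sum>i\<in>{p..<n}. z i))"
      unfolding sg_def by (simp add: cnj_xi_pow[OF r])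
    moreover have "(\<Sum>F\<in>?P. if ?c F then xi r ^ (\<Sum>i<n. F i * z i) else 0) * (sg * xi r ^ ((r - 1) * (\<Sum>i\<in>{p..<n}. z i)))
        = sg * (\<Sum>F\<in>?P. if ?c F then (\<Prod>i<n. (xi r ^ e F i) ^ z i) else 0)"
      unfolding sum_distrib_right[of _ ?P] sum_distrib_left[of _ _ ?P]
    proof (rule sum.cong[OF refl])
      fix F show "(if ?c F then xi r ^ (\<Sum>i<n. F i * z i) else 0) * (sg * xi r ^ ((r - 1) * (\<Sum>i\<in>{p..<n}. z i)))
        = sg * (if ?c F then (\<Prod>i<n. (xi r ^ e F i) ^ z i) else 0)"
      proof (cases "?c F")
        case True
        have "(if ?c F then xi r ^ (\<Sum>i<n. F i * z i) else 0) * (sg * xi r ^ ((r - 1) * (\<Sum>i\<in>{p..<n}. z i)))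
            = xi r ^ (\<Sum>i<n. F i * z i) * (sg * xi r ^ ((r - 1) * (\<Sum>i\<in>{p..<n}. z i)))"
          using True by (simp only: if_P)
        also have "\<dots> = sg * (xi r ^ (\<Sum>i<n. F i * z i) * xi r ^ ((r - 1) * (\<Sum>i\<in>{p..<n}. z i)))"
          by (simp only: mult_ac)
        also have "\<dots> = sg * (\<Prod>i<n. (xi r ^ e F i) ^ z i)" by (simp only: key1)
        also have "\<dots> = sg * (if ?c F then (\<Prod>i<n. (xi r ^ e F i) ^ z i) else 0)"
          using True by (simp only: if_P)
        finally show ?thesis .
      next
        case False
        show ?thesis by (simp only: if_not_P[OF False] mult_zero_left mult_zero_right)
      qed
    qed
    ultimately show ?thesis unfolding chi_tensor[OF r rp] by simp
  qed
  have step2: "(\<Sum>z\<in>Zs r n. if ?c F then (\<Prod>i<n. (xi r ^ e F i) ^ z i) else 0)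
      = (if ?c F \<and> (\<forall>i<n. r dvd e F i) then of_nat r ^ n else 0)" for F
  proof (cases "?c F")
    case False
    have nc: "\<not> (?c F \<and> (\<forall>i<n. r dvd e F i))" using False by blast
    show ?thesis by (simp only: if_not_P[OF False] if_not_P[OF nc] sum.neutral_const)
  next
    case True
    have "(\<Sum>z\<in>Zs r n. (\<Prod>i<n. (xi r ^ e F i) ^ z i)) = (\<Prod>i<n. \<Sum>c<r. (xi r ^ e F i) ^ c)"
      using Zs_sum[OF r, of n "\<lambda>i c. (xi r ^ e F i) ^ c"] by simp
    also have "\<dots> = (\<Prod>i<n. if r dvd e F i then of_nat r else 0)"
      using geo_xi_r[OF r] by simp
    also have "\<dots> = (if \<forall>i<n. r dvd e F i then of_nat r ^ n else 0)"
      by (rule prod_if_const)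
    finally show ?thesis using True by simp
  qed
  have seteq: "{F \<in> ?P. ?c F \<and> (\<forall>i<n. r dvd e F i)}
      = {F \<in> PiE {..<n} (\<lambda>i. if i < p then S0 r m else S1 r m). ?c F}"
  proof -
    have "F \<in> ?P \<and> (\<forall>i<n. r dvd e F i) \<longleftrightarrow> F \<in> PiE {..<n} (\<lambda>i. if i < p then S0 r m else S1 r m)" for F
    proof -
      have pw: "(\<forall>i<n. F i \<in> {..<Suc (r * m)}) \<and> (\<forall>i<n. r dvd e F i) \<longleftrightarrow> (\<forall>i<n. F i \<in> (if i < p then S0 r m else S1 r m))"
      proof -
        have "(F i \<in> {..<Suc (r * m)} \<and> r dvd e F i) \<longleftrightarrow> F i \<in> (if i < p then S0 r m else S1 r m)" for i
          unfolding e_def S0_def S1_def by (cases "i < p") simp_all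
        then show ?thesis by blast
      qed
      have A: "F \<in> ?P \<longleftrightarrow> (\<forall>i<n. F i \<in> {..<Suc (r * m)}) \<and> F \<in> extensional {..<n}"
        by (simp only: PiE_iff Ball_def lessThan_iff)
      have B: "F \<in> PiE {..<n} (\<lambda>i. if i < p then S0 r m else S1 r m) \<longleftrightarrow>
          (\<forall>i<n. F i \<in> (if i < p then S0 r m else S1 r m)) \<and> F \<in> extensional {..<n}"
        by (simp only: PiE_iff Ball_def lessThan_iff)
      show ?thesis unfolding A B by (rule prop_aux[OF pw])
    qed
    note H = this
    show ?thesis
    proof (rule Collect_cong)
      fix F show "(F \<in> ?P \<and> ?c F \<and> (\<forall>i<n. r dvd e F i)) =
          (F \<in> PiE {..<n} (\<lambda>i. if i < p then S0 r m else S1 r m) \<and> ?c F)"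
        by (rule prop_aux2[OF H])
    qed
  qed
  have "(\<Sum>z\<in>Zs r n. chi r n m (\<rho>, z) * cnj (sg * xi r ^ (\<Sum>i\<in>{p..<n}. z i)))
      = sg * (\<Sum>z\<in>Zs r n. \<Sum>F\<in>?P. if ?c F then (\<Prod>i<n. (xi r ^ e F i) ^ z i) else 0)"
    unfolding step1 by (simp add: sum_distrib_left)
  also have "\<dots> = sg * (\<Sum>F\<in>?P. \<Sum>z\<in>Zs r n. if ?c F then (\<Prod>i<n. (xi r ^ e F i) ^ z i) else 0)"
    by (simp only: sum.swap[of _ "Zs r n"])
  also have "\<dots> = sg * (\<Sum>F\<in>?P. if ?c F \<and> (\<forall>i<n. r dvd e F i) then of_nat r ^ n else 0)"
    by (simp only: step2)
  also have "(\<Sum>F\<in>?P. if ?c F \<and> (\<forall>i<n. r dvd e F i) then (of_nat r ^ n :: complex) else 0)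
      = (\<Sum>F\<in>{F \<in> ?P. ?c F \<and> (\<forall>i<n. r dvd e F i)}. of_nat r ^ n)"
    by (rule sum.inter_filter[OF finP, symmetric])
  also have "\<dots> = of_nat r ^ n * of_nat (card {F \<in> PiE {..<n} (\<lambda>i. if i < p then S0 r m else S1 r m). ?c F})"
    unfolding seteq by simp
  finally show ?thesis unfolding sg_def by (simp add: mult.assoc)
qed

lemma Hsub_eq: "Hsub r n k = Hp n (n - k) \<times> Zs r n"
  unfolding Hsub_def W_eq Hp_def by auto

lemma psi_eq: "psi r n k (\<rho>, z) = of_int (sign (\<lambda>i. if n - k \<le> i then \<rho> i else i)) * xi r ^ (\<Sum>i\<in>{n-k..<n}. z i)"
  by (simp add: psi_def xi_def cong: if_cong)

lemma sgn2_comp: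
  fixes \<rho>1 \<rho>2 :: "nat \<Rightarrow> nat"
  assumes r1: "\<rho>1 permutes {..<p}" and r2: "\<rho>2 permutes {p..<n}"
  shows "(\<lambda>i. if p \<le> i then (\<rho>1 \<circ> \<rho>2) i else i) = \<rho>2"
proof
  fix i show "(if p \<le> i then (\<rho>1 \<circ> \<rho>2) i else i) = \<rho>2 i"
  proof (cases "p \<le> i")
    case True
    show ?thesis
    proof (cases "i < n")
      case True
      then have "\<rho>2 i \<in> {p..<n}" using permutes_in_image[OF r2] \<open>p \<le> i\<close> by simp
      then have "\<rho>2 i \<notin> {..<p}" by auto
      then have "\<rho>1 (\<rho>2 i) = \<rho>2 i" by (rule permutes_not_in[OF r1])
      then show ?thesis using \<open>p \<le> i\<close> by simp
    next
      case False
      then show ?thesis using permutes_not_in[OF r1, of i] permutes_not_in[OF r2, of i] \<open>p \<le> i\<close> by simp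
    qed
  next
    case False
    then show ?thesis using permutes_not_in[OF r2, of i] by simp
  qed
qed

lemma card_Zs: "r > 0 \<Longrightarrow> (of_nat (card (Zs r n)) :: complex) = of_nat r ^ n"
  using Zs_sum[of r n "\<lambda>_ _. 1"] by simp

lemma Hsum:
  assumes r: "r \<ge> 2" and kn: "k \<le> n"
  shows "(\<Sum>c\<in>Hsub r n k. chi r n m c * cnj (psi r n k c))
     = of_nat r ^ n * ((\<Prod>t<n - k. of_nat (Suc m) + of_nat t) * (\<Prod>t<k. of_nat m - of_nat t))"
    and "(of_nat (card (Hsub r n k)) :: complex) = of_nat r ^ n * (fact (n - k) * fact k)"
proof -
  define p where "p = n - k"
  have pn: "p \<le> n" unfolding p_def by simp
  have r0: "r > 0" using r by simp
  let ?P1 = "{\<rho>. \<rho> permutes {..<p}}" and ?P2 = "{\<rho>. \<rho> permutes {p..<n}}"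
  let ?cs = "\<lambda>\<rho>. card {F \<in> PiE {..<n} (\<lambda>i. if i < p then S0 r m else S1 r m). \<forall>i<n. F (\<rho> i) = F i}"
  let ?sg = "\<lambda>\<rho>. sign (\<lambda>i. if p \<le> i then \<rho> i else i)"
  have bij: "bij_betw (\<lambda>(\<rho>1, \<rho>2). \<rho>1 \<circ> \<rho>2) (?P1 \<times> ?P2) (Hp n p)" by (rule Hp_bij[OF pn])
  have "(\<Sum>c\<in>Hsub r n k. chi r n m c * cnj (psi r n k c))
      = (\<Sum>\<rho>\<in>Hp n p. \<Sum>z\<in>Zs r n. chi r n m (\<rho>, z) * cnj (psi r n k (\<rho>, z)))"
    unfolding Hsub_eq p_def by (subst sum.cartesian_product) (simp add: case_prod_unfold)
  also have "\<dots> = (\<Sum>\<rho>\<in>Hp n p. of_int (?sg \<rho>) * of_nat r ^ n * of_nat (?cs \<rho>))"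
  proof (rule sum.cong[OF refl])
    fix \<rho> assume "\<rho> \<in> Hp n p"
    then have rp: "\<rho> permutes {..<n}" unfolding Hp_def by simp
    show "(\<Sum>z\<in>Zs r n. chi r n m (\<rho>, z) * cnj (psi r n k (\<rho>, z))) = of_int (?sg \<rho>) * of_nat r ^ n * of_nat (?cs \<rho>)"
      unfolding psi_eq p_def[symmetric] by (rule zsum_rho[OF r0 pn rp])
  qed
  also have "\<dots> = (\<Sum>x\<in>?P1 \<times> ?P2. (\<lambda>\<rho>. of_int (?sg \<rho>) * of_nat r ^ n * of_nat (?cs \<rho>)) ((\<lambda>(\<rho>1, \<rho>2). \<rho>1 \<circ> \<rho>2) x))"
    by (rule sum.reindex_bij_betw[OF bij, symmetric])
  also have "\<dots> = (\<Sum>x\<in>?P1 \<times> ?P2. of_nat r ^ n * (of_nat (cnt {..<p} (S0 r m) (fst x)) *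
        (of_int (sign (snd x)) * of_nat (cnt {p..<n} (S1 r m) (snd x)))))"
  proof (rule sum.cong[OF refl])
    fix x assume x: "x \<in> ?P1 \<times> ?P2"
    obtain \<rho>1 \<rho>2 where xe: "x = (\<rho>1, \<rho>2)" by (cases x)
    have r1: "\<rho>1 permutes {..<p}" and r2: "\<rho>2 permutes {p..<n}" using x xe by auto
    show "(\<lambda>\<rho>. of_int (?sg \<rho>) * of_nat r ^ n * of_nat (?cs \<rho>)) ((\<lambda>(\<rho>1, \<rho>2). \<rho>1 \<circ> \<rho>2) x)
        = (of_nat r ^ n * (of_nat (cnt {..<p} (S0 r m) (fst x)) *
        (of_int (sign (snd x)) * of_nat (cnt {p..<n} (S1 r m) (snd x)))) :: complex)"
    proof -
      have e1: "?sg (\<rho>1 \<circ> \<rho>2) = sign \<rho>2" using sgn2_comp[OF r1 r2] by simp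
      have e2: "?cs (\<rho>1 \<circ> \<rho>2) = cnt {..<p} (S0 r m) \<rho>1 * cnt {p..<n} (S1 r m) \<rho>2"
        by (rule card_split[OF pn r1 r2])
      have "(\<lambda>\<rho>. of_int (?sg \<rho>) * of_nat r ^ n * of_nat (?cs \<rho>)) ((\<lambda>(\<rho>1, \<rho>2). \<rho>1 \<circ> \<rho>2) x)
          = (of_int (?sg (\<rho>1 \<circ> \<rho>2)) * of_nat r ^ n * of_nat (?cs (\<rho>1 \<circ> \<rho>2)) :: complex)"
        unfolding xe prod.case ..
      also have "\<dots> = of_int (sign \<rho>2) * of_nat r ^ n * (of_nat (cnt {..<p} (S0 r m) \<rho>1) * of_nat (cnt {p..<n} (S1 r m) \<rho>2))"
        unfolding e1 e2 by simp
      also have "\<dots> = of_nat r ^ n * (of_nat (cnt {..<p} (S0 r m) (fst x)) *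
        (of_int (sign (snd x)) * of_nat (cnt {p..<n} (S1 r m) (snd x))))"
        unfolding xe fst_conv snd_conv by (simp add: ac_simps)
      finally show ?thesis .
    qed
  qed
  also have "\<dots> = of_nat r ^ n * ((\<Sum>\<rho>1\<in>?P1. of_nat (cnt {..<p} (S0 r m) \<rho>1)) *
       (\<Sum>\<rho>2\<in>?P2. of_int (sign \<rho>2) * of_nat (cnt {p..<n} (S1 r m) \<rho>2)))"
  proof -
    have "(\<Sum>x\<in>?P1 \<times> ?P2. of_nat (cnt {..<p} (S0 r m) (fst x)) *
        (of_int (sign (snd x)) * of_nat (cnt {p..<n} (S1 r m) (snd x))) :: complex)
      = (\<Sum>a\<in>?P1. \<Sum>b\<in>?P2. of_nat (cnt {..<p} (S0 r m) a) *
        (of_int (sign b) * of_nat (cnt {p..<n} (S1 r m) b)))"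
      by (subst sum.cartesian_product) (simp add: case_prod_unfold)
    also have "\<dots> = (\<Sum>\<rho>1\<in>?P1. of_nat (cnt {..<p} (S0 r m) \<rho>1)) *
       (\<Sum>\<rho>2\<in>?P2. of_int (sign \<rho>2) * of_nat (cnt {p..<n} (S1 r m) \<rho>2))"
      by (rule sum_product[symmetric])
    finally show ?thesis by (simp only: sum_distrib_left[symmetric])
  qed
  also have "\<dots> = of_nat r ^ n * ((\<Prod>t<n - k. of_nat (Suc m) + of_nat t) * (\<Prod>t<k. of_nat m - of_nat t))"
  proof -
    have f0: "finite (S0 r m)" unfolding S0_def by simp
    have f1: "finite (S1 r m)" unfolding S1_def by simp
    have c0: "card (S0 r m) = Suc m" unfolding S0_def by (rule card_S0[OF r0])
    have c1: "card (S1 r m) = m" unfolding S1_def by (rule card_S1[OF r])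
    have "(\<Sum>\<rho>1\<in>?P1. of_nat (cnt {..<p} (S0 r m) \<rho>1) :: complex) = (\<Prod>t<p. of_nat (Suc m) + of_nat t)"
      using count_sums[of "{..<p}" "S0 r m"] f0 c0 by simp
    moreover have "(\<Sum>\<rho>2\<in>?P2. of_int (sign \<rho>2) * of_nat (cnt {p..<n} (S1 r m) \<rho>2) :: complex)
        = (\<Prod>t<k. of_nat m - of_nat t)"
    proof -
      have "card {p..<n} = k" unfolding p_def using kn by simp
      then show ?thesis using count_sums[of "{p..<n}" "S1 r m"] f1 c1 by simp
    qed
    ultimately show ?thesis unfolding p_def by simp
  qed
  finally show "(\<Sum>c\<in>Hsub r n k. chi r n m c * cnj (psi r n k c))
     = of_nat r ^ n * ((\<Prod>t<n - k. of_nat (Suc m) + of_nat t) * (\<Prod>t<k. of_nat m - of_nat t))" .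
  have "card (Hp n p) = card (?P1 \<times> ?P2)" using bij_betw_same_card[OF bij] by simp
  also have "\<dots> = fact p * fact k"
  proof -
    have "card {p..<n} = k" unfolding p_def using kn by simp
    then show ?thesis by (simp add: card_cartesian_product card_permutations)
  qed
  finally have "card (Hp n p) = fact p * fact k" .
  then show "(of_nat (card (Hsub r n k)) :: complex) = of_nat r ^ n * (fact (n - k) * fact k)"
    unfolding Hsub_eq p_def[symmetric] card_cartesian_product using card_Zs[OF r0, of n]
    by (simp add: p_def mult_ac)
qed

lemma rising_binom:
  "(\<Prod>t<p. of_nat (Suc m) + of_nat t :: complex) / fact p = of_nat (m + p choose p)"
proof -
  have "(of_nat (m + p choose p) :: complex) = of_nat (m + p) gchoose p" by (rule binomial_gbinomial)
  also have "\<dots> = pochhammer (of_nat (m + p) - of_nat p + 1) p / fact p" by (rule gbinomial_pochhammer')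
  also have "of_nat (m + p) - of_nat p + 1 = (of_nat (Suc m) :: complex)" by simp
  also have "pochhammer (of_nat (Suc m) :: complex) p = (\<Prod>t<p. of_nat (Suc m) + of_nat t)"
    by (simp add: pochhammer_prod atLeast0LessThan)
  finally show ?thesis by simp
qed

lemma falling_binom:
  "(\<Prod>t<k. of_nat m - of_nat t :: complex) / fact k = of_nat (m choose k)"
proof -
  have "(of_nat (m choose k) :: complex) = of_nat m gchoose k" by (rule binomial_gbinomial)
  also have "\<dots> = (\<Prod>i=0..<k. of_nat m - of_nat i) div fact k" by (rule gbinomial_prod_rev)
  finally show ?thesis by (simp add: atLeast0LessThan)
qed

lemma inner_chi:
  assumes r: "r \<ge> 2" and kn: "k \<le> n"
  shows "inner r n (chi r n m) (chi_lambda r n k) = of_nat (m + (n - k) choose (n - k)) * of_nat (m choose k)"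
proof -
  have r0: "r > 0" using r by simp
  have cl: "\<forall>g\<in>W r n. \<forall>h\<in>W r n. \<forall>c\<in>W r n. wmult r h g = wmult r c h \<longrightarrow> chi r n m g = chi r n m c"
    using chi_conj[OF r0] by blast
  have "inner r n (chi r n m) (chi_lambda r n k)
      = (\<Sum>c\<in>Hsub r n k. chi r n m c * cnj (psi r n k c)) / of_nat (card (Hsub r n k))"
    by (rule frobenius[OF r0 cl])
  also have "\<dots> = (of_nat r ^ n * ((\<Prod>t<n - k. of_nat (Suc m) + of_nat t) * (\<Prod>t<k. of_nat m - of_nat t)))
      / (of_nat r ^ n * (fact (n - k) * fact k))"
    unfolding Hsum[OF r kn] ..
  also have "\<dots> = ((\<Prod>t<n - k. of_nat (Suc m) + of_nat t) / fact (n - k)) * ((\<Prod>t<k. of_nat m - of_nat t) / fact k)"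
    using r0 by simp
  also have "\<dots> = of_nat (m + (n - k) choose (n - k)) * of_nat (m choose k)"
    unfolding rising_binom falling_binom ..
  finally show ?thesis .
qed

lemma inner_cong:
  assumes "\<forall>w\<in>W r n. f w = g w"
  shows "inner r n f \<beta> = inner r n g \<beta>"
  unfolding inner_def using assms by (simp cong: sum.cong)

lemma inner_lin:
  assumes "finite J"
  shows "inner r n (\<lambda>w. \<Sum>j\<in>J. a j * f j w) \<beta> = (\<Sum>j\<in>J. a j * inner r n (f j) \<beta>)"
proof -
  have "(\<Sum>w\<in>W r n. (\<Sum>j\<in>J. a j * f j w) * cnj (\<beta> w)) = (\<Sum>w\<in>W r n. \<Sum>j\<in>J. a j * (f j w * cnj (\<beta> w)))"
    by (simp add: sum_distrib_right mult.assoc)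
  also have "\<dots> = (\<Sum>j\<in>J. \<Sum>w\<in>W r n. a j * (f j w * cnj (\<beta> w)))" by (rule sum.swap)
  also have "\<dots> = (\<Sum>j\<in>J. a j * (\<Sum>w\<in>W r n. f j w * cnj (\<beta> w)))" by (simp add: sum_distrib_left)
  finally have e: "(\<Sum>w\<in>W r n. (\<Sum>j\<in>J. a j * f j w) * cnj (\<beta> w)) = (\<Sum>j\<in>J. a j * (\<Sum>w\<in>W r n. f j w * cnj (\<beta> w)))" .
  show ?thesis unfolding inner_def e sum_divide_distrib[of _ J] times_divide_eq_right ..
qed

lemma inner_foulkes:
  assumes r: "r \<ge> 2" and kn: "k \<le> n"
  shows "inner r n (foulkes r n j) (chi_lambda r n k) = (if j = k then of_nat (n choose k) else 0)"
proof -
  have "foulkes r n j = (\<lambda>w. \<Sum>i\<le>j. ((-1) ^ i * of_nat (Suc n choose i)) * chi r n (j - i) w)"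
    unfolding foulkes_def by (simp add: mult.assoc)
  then have "inner r n (foulkes r n j) (chi_lambda r n k)
      = (\<Sum>i\<le>j. ((-1) ^ i * of_nat (Suc n choose i)) * inner r n (chi r n (j - i)) (chi_lambda r n k))"
    using inner_lin[of "{..j}"] by simp
  also have "\<dots> = (\<Sum>i\<le>j. (-1)^i * of_nat (Suc n choose i) *
           (of_nat (j - i + (n - k) choose (n - k)) * of_nat (j - i choose k)))"
    by (simp add: inner_chi[OF r kn])
  also have "\<dots> = (if j = k then of_nat (n choose k) else 0)" by (rule orth[OF kn])
  finally show ?thesis .
qed

theorem mainTheorem4:
  fixes r n k :: nat and \<phi> :: "colperm \<Rightarrow> complex" and c :: "nat \<Rightarrow> complex"
  assumes "r \<ge> 2" and "n \<ge> 1"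
    and "\<forall>w\<in>W r n. \<forall>w'\<in>W r n. ell r n w = ell r n w' \<longrightarrow> \<phi> w = \<phi> w'"
    and "\<forall>w\<in>W r n. \<phi> w = (\<Sum>j\<le>n. c j * foulkes r n j w)"
    and "k \<le> n"
  shows "c k = inner r n \<phi> (chi_lambda r n k) / of_nat (n choose k)"
proof -
  have "inner r n \<phi> (chi_lambda r n k) = inner r n (\<lambda>w. \<Sum>j\<le>n. c j * foulkes r n j w) (chi_lambda r n k)"
    by (rule inner_cong) (use assms(4) in blast)
  also have "\<dots> = (\<Sum>j\<le>n. c j * inner r n (foulkes r n j) (chi_lambda r n k))"
    by (rule inner_lin) simp
  also have "\<dots> = (\<Sum>j\<le>n. if j = k then c j * of_nat (n choose k) else 0)"
    by (rule sum.cong[OF refl]) (simp add: inner_foulkes[OF assms(1) assms(5)])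
  also have "\<dots> = c k * of_nat (n choose k)" using assms(5) by simp
  finally have "inner r n \<phi> (chi_lambda r n k) = c k * of_nat (n choose k)" .
  moreover have "(of_nat (n choose k) :: complex) \<noteq> 0" using assms(5) by simp
  ultimately show ?thesis by simp
qed


end
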